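(* Consider the delay differential system \[ \begin{aligned} \dot S_h(t)&=\beta_h-C_{vh}\frac{I_v(t)}{N_v(t)}S_h(t)-\mu_hS_h(t),\\ \dot I_h(t)&=C_{vh}\frac{I_v(t-\tau)}{N_v(t-\tau)}S_h(t-\tau)-\mu_hI_h(t),\\ \dot S_v(t)&=\beta_v-C_{hv}I_h(t)S_v(t)-\mu_vS_v(t),\\ \dot I_v(t)&=C_{hv}I_h(t)S_v(t)-\mu_vI_v(t), \end{aligned} \] where $N_v(t)=S_v(t)+I_v(t)$, the parameters $\beta_h,\beta_v,\mu_h,\mu_v,C_{vh},C_{hv}$ are positive and $\tau\ge 0$. For every initial function $\varphi\in C_+$, the solution $x(t)=(S_h(t),I_h(t),S_v(t),I_v(t))^T$ of this system through $\varphi$ exists on $[0,\infty)$, is unique, nonnegative, and ultimately bounded on $[0,\infty)$.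
   Context: $C=C([-\tau,0],\mathbb{R}_+^4)$ with the sup-norm, $\mathbb{R}_+=[0,\infty)$, and the phase space is $C_+=\{\varphi=(\varphi_1,\varphi_2,\varphi_3,\varphi_4)^T\in C:\ \varphi_3(\theta)+\varphi_4(\theta)>0 \text{ for all }\theta\in[-\tau,0]\}$. The solution through $\varphi$ satisfies $x(\theta)=\varphi(\theta)$ for $\theta\in[-\tau,0]$. *)

theory Defs
  imports "HOL-Analysis.Analysis"
begin

text \<open>States are vectors in real^4 with components
  1 = S_h, 2 = I_h, 3 = S_v, 4 = I_v.\<close>

definition in_Cplus :: "real \<Rightarrow> (real \<Rightarrow> real^4) \<Rightarrow> bool" where
  "in_Cplus \<tau> \<phi> \<longleftrightarrow>
     continuous_on {-\<tau>..0} \<phi> \<and>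
     (\<forall>\<theta>\<in>{-\<tau>..0}. \<forall>i. 0 \<le> \<phi> \<theta> $ i) \<and>
     (\<forall>\<theta>\<in>{-\<tau>..0}. \<phi> \<theta> $ 3 + \<phi> \<theta> $ 4 > 0)"

definition rhs :: "real \<Rightarrow> real \<Rightarrow> real \<Rightarrow> real \<Rightarrow> real \<Rightarrow> real \<Rightarrow>
                   real^4 \<Rightarrow> real^4 \<Rightarrow> real^4" where
  "rhs \<beta>h \<beta>v \<mu>h \<mu>v Cvh Chv xt xd =
     (\<chi> i. if i = 1 then \<beta>h - Cvh * (xt $ 4 / (xt $ 3 + xt $ 4)) * xt $ 1 - \<mu>h * xt $ 1
           else if i = 2 then Cvh * (xd $ 4 / (xd $ 3 + xd $ 4)) * xd $ 1 - \<mu>h * xt $ 2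
           else if i = 3 then \<beta>v - Chv * xt $ 2 * xt $ 3 - \<mu>v * xt $ 3
           else Chv * xt $ 2 * xt $ 3 - \<mu>v * xt $ 4)"

definition is_solution :: "real \<Rightarrow> real \<Rightarrow> real \<Rightarrow> real \<Rightarrow> real \<Rightarrow> real \<Rightarrow> real \<Rightarrow>
                           (real \<Rightarrow> real^4) \<Rightarrow> (real \<Rightarrow> real^4) \<Rightarrow> bool" where
  "is_solution \<beta>h \<beta>v \<mu>h \<mu>v Cvh Chv \<tau> \<phi> x \<longleftrightarrow>
     (\<forall>\<theta>\<in>{-\<tau>..0}. x \<theta> = \<phi> \<theta>) \<and>
     continuous_on {-\<tau>..} x \<and>
     (\<forall>t\<ge>0. (x has_vector_derivative rhs \<beta>h \<beta>v \<mu>h \<mu>v Cvh Chv (x t) (x (t - \<tau>)))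
               (at t within {0..}))"

end

theory Submission
  imports Defs
begin

lemma comp_deriv:
  "(x has_vector_derivative D) F \<Longrightarrow> ((\<lambda>t. x t $ i) has_real_derivative D $ i) F"
  using bounded_linear.has_vector_derivative[OF bounded_linear_vec_nth, of x D F i]
  by (simp add: has_real_derivative_iff_has_vector_derivative)

lemma within_to_at:
  assumes "(f has_vector_derivative D) (at t within {0..})" "t > (0::real)"
  shows "(f has_vector_derivative D) (at t)"
proof -
  have "(f has_vector_derivative D) (at t within {0<..})"
    using assms(1) by (rule has_vector_derivative_within_subset) auto
  then show ?thesis using assms(2) by (subst (asm) has_vector_derivative_within_open) auto
qed

lemma barrier_up:
  fixes f :: "real \<Rightarrow> real"
  assumes cont: "continuous_on {a..} f" and fa: "f a \<le> c"
    and der: "\<And>t. t > a \<Longrightarrow> f t > c \<Longrightarrow> \<exists>d. (f has_real_derivative d) (at t) \<and> d \<le> 0"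
  shows "\<forall>t\<ge>a. f t \<le> c"
proof (rule ccontr)
  assume "\<not> ?thesis"
  then obtain s where s: "s \<ge> a" "f s > c" by auto
  define A where "A = {a..s} \<inter> f -` {..c}"
  have cA: "closed A" unfolding A_def
    by (rule continuous_closed_preimage) (auto intro: continuous_on_subset[OF cont])
  have aA: "a \<in> A" using fa s by (auto simp: A_def)
  have bA: "bdd_above A" by (auto simp: A_def bdd_above_def)
  define t1 where "t1 = Sup A"
  have t1A: "t1 \<in> A" unfolding t1_def using closed_contains_Sup[OF _ bA cA] aA by auto
  have t1s: "t1 < s" using t1A s by (auto simp: A_def less_le)
  have at1: "a \<le> t1" using t1A by (auto simp: A_def)
  have gt: "f t > c" if "t1 < t" "t \<le> s" for t
  proof (rule ccontr)
    assume "\<not> f t > c"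
    then have "t \<in> A" using that at1 by (auto simp: A_def)
    then have "t \<le> t1" unfolding t1_def using bA by (rule cSup_upper)
    then show False using that by auto
  qed
  have "\<exists>l z. t1 < z \<and> z < s \<and> DERIV f z :> l \<and> f s - f t1 = (s - t1) * l"
  proof (rule MVT[OF t1s])
    show "continuous_on {t1..s} f" using at1 by (auto intro: continuous_on_subset[OF cont])
    fix x assume "t1 < x" "x < s"
    then show "f differentiable (at x)" using der[of x] gt[of x] at1
      by (auto simp: real_differentiable_def)
  qed
  then obtain l z where z: "t1 < z" "z < s" "DERIV f z :> l" "f s - f t1 = (s - t1) * l" by auto
  obtain d where d: "DERIV f z :> d" "d \<le> 0" using der[of z] gt[of z] z at1 by auto
  have "l = d" using DERIV_unique[OF z(3) d(1)] .
  then have "f s \<le> f t1" using z(4) d(2) t1s \<open>l = d\<close> mult_nonneg_nonpos[of "s-t1" d] by auto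
  moreover have "f t1 \<le> c" using t1A by (auto simp: A_def)
  ultimately show False using s by auto
qed

lemma barrier_low:
  fixes f :: "real \<Rightarrow> real"
  assumes cont: "continuous_on {a..} f" and fa: "f a \<ge> c"
    and der: "\<And>t. t > a \<Longrightarrow> f t < c \<Longrightarrow> \<exists>d. (f has_real_derivative d) (at t) \<and> d \<ge> 0"
  shows "\<forall>t\<ge>a. f t \<ge> c"
proof -
  have "\<forall>t\<ge>a. - f t \<le> - c"
  proof (rule barrier_up)
    show "continuous_on {a..} (\<lambda>t. - f t)" using cont by (intro continuous_intros)
    fix t assume "t > a" "- f t > - c"
    then obtain d where "(f has_real_derivative d) (at t)" "d \<ge> 0" using der[of t] by auto
    then show "\<exists>d. ((\<lambda>t. - f t) has_real_derivative d) (at t) \<and> d \<le> 0"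
      by (intro exI[of _ "-d"]) (auto intro: derivative_intros)
  qed (use fa in auto)
  then show ?thesis by auto
qed

lemma lin_formula:
  fixes f :: "real \<Rightarrow> real"
  assumes b: "b > 0"
    and d: "\<And>t. t \<ge> 0 \<Longrightarrow> (f has_real_derivative (A - b * f t)) (at t within {0..})"
  shows "t \<ge> 0 \<Longrightarrow> f t = A/b + (f 0 - A/b) * exp(-b*t)"
proof -
  define g where "g t = (f t - A/b) * exp (b*t)" for t
  have "\<exists>c. \<forall>x\<in>{0..}. g x = c"
  proof (rule has_field_derivative_zero_constant)
    fix x :: real assume "x \<in> {0..}"
    then have dx: "(f has_real_derivative (A - b * f x)) (at x within {0..})" using d by auto
    have "(g has_real_derivative ((A - b * f x) * exp (b*x) + (f x - A/b) * (exp (b*x) * b))) (at x within {0..})"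
      unfolding g_def by (intro derivative_eq_intros) (use dx in auto)
    moreover have "(A - b * f x) * exp (b*x) + (f x - A/b) * (exp (b*x) * b) = 0"
      using b by (simp add: field_simps)
    ultimately show "(g has_real_derivative 0) (at x within {0..})" by simp
  qed auto
  then obtain c where c: "\<And>x. x \<ge> 0 \<Longrightarrow> g x = c" by auto
  assume t: "t \<ge> 0"
  have "g t = g 0" using c[OF t] c[of 0] by simp
  then have "(f t - A/b) * exp (b*t) = f 0 - A/b" by (simp add: g_def)
  then have "f t - A/b = (f 0 - A/b) * exp(-b*t)"
    by (metis exp_minus_inverse mult.assoc mult.commute mult.right_neutral mult_minus_left)
  then show ?thesis by simp
qed

lemma eventually_le:
  fixes f :: "real \<Rightarrow> real"
  assumes b: "b > 0"
    and d: "\<And>t. t \<ge> a \<Longrightarrow> \<exists>d. (f has_real_derivative d) (at t) \<and> d \<le> A - b * f t"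
  shows "\<exists>T. \<forall>t\<ge>T. f t \<le> A/b + 1"
proof -
  define g where "g t = (f t - A/b) * exp (b*t)" for t
  have mono: "g t \<le> g a" if "t \<ge> a" for t
  proof (rule DERIV_nonpos_imp_nonincreasing[OF that])
    fix x assume x: "a \<le> x" "x \<le> t"
    obtain dd where dd: "(f has_real_derivative dd) (at x)" "dd \<le> A - b * f x" using d[of x] x by auto
    have "(g has_real_derivative (dd * exp (b*x) + (f x - A/b) * (exp (b*x) * b))) (at x)"
      unfolding g_def by (intro derivative_eq_intros) (use dd(1) in auto)
    moreover have "dd * exp (b*x) + (f x - A/b) * (exp (b*x) * b) = (dd + b * f x - A) * exp (b*x)"
      using b by (simp add: field_simps)
    moreover have "(dd + b * f x - A) * exp (b*x) \<le> 0"
      using dd(2) by (intro mult_nonpos_nonneg) auto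
    ultimately show "\<exists>y. (g has_real_derivative y) (at x) \<and> y \<le> 0" by auto
  qed
  define T where "T = max a (ln (\<bar>g a\<bar> + 1) / b)"
  have "f t \<le> A/b + 1" if t: "t \<ge> T" for t
  proof -
    have ta: "t \<ge> a" using t by (simp add: T_def)
    have "(f t - A/b) * exp (b*t) \<le> g a" using mono[OF ta] by (simp add: g_def)
    then have "(f t - A/b) * exp (b*t) * exp (-b*t) \<le> g a * exp (-b*t)"
      by (intro mult_right_mono) auto
    then have 1: "f t - A/b \<le> g a * exp (-b*t)"
      by (simp add: mult.assoc flip: exp_add)
    have "ln (\<bar>g a\<bar> + 1) / b \<le> t" using t by (simp add: T_def)
    then have "ln (\<bar>g a\<bar> + 1) \<le> t * b" using b by (simp add: divide_le_eq)
    then have "\<bar>g a\<bar> + 1 \<le> exp (b*t)"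
      by (subst ln_le_cancel_iff[symmetric]) (auto simp: mult.commute)
    then have "exp (-b*t) * (\<bar>g a\<bar> + 1) \<le> exp (-b*t) * exp (b*t)"
      by (intro mult_left_mono) auto
    also have "\<dots> = 1" by (simp add: exp_minus)
    finally have e: "exp (-b*t) * (\<bar>g a\<bar> + 1) \<le> 1" .
    have "g a * exp (-b*t) \<le> \<bar>g a\<bar> * exp (-b*t)"
      by (intro mult_right_mono) auto
    also have "\<dots> \<le> exp (-b*t) * (\<bar>g a\<bar> + 1)" by (simp add: algebra_simps)
    finally have "g a * exp (-b*t) \<le> 1" using e by linarith
    then show ?thesis using 1 by linarith
  qed
  then show ?thesis by auto
qed

lemma int_deriv:
  fixes g :: "real \<Rightarrow> 'a::banach"
  assumes g: "continuous_on UNIV g" and t: "t \<ge> 0"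
  shows "((\<lambda>s. integral {0..s} g) has_vector_derivative g t) (at t within {0..})"
proof -
  define K where "K s = integral {-1..s} g" for s
  have "(K has_vector_derivative g t) (at t within {-1..t+1})"
    unfolding K_def using t by (intro integral_has_vector_derivative continuous_on_subset[OF g]) auto
  moreover have "at t within {-1..t+1} = at t"
    using t by (intro at_within_interior) auto
  ultimately have dK: "(K has_vector_derivative g t) (at t)" by simp
  have "((\<lambda>s. K s - K 0) has_vector_derivative g t) (at t within {0..})"
    using has_vector_derivative_at_within[OF dK] by (simp only: has_vector_derivative_diff_const)
  then show ?thesis
  proof (rule has_vector_derivative_transform_within[where d=1])
    show "t \<in> {0..}" using t by simp
    fix s :: real assume s: "s \<in> {0..}"
    have "integral {-1..0} g + integral {0..s} g = integral {-1..s} g"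
      by (rule Henstock_Kurzweil_Integration.integral_combine) (use s in \<open>auto intro: integrable_continuous_interval continuous_on_subset[OF g]\<close>)
    then show "K s - K 0 = integral {0..s} g" unfolding K_def by (simp add: algebra_simps)
  qed simp
qed

lemma int_exp:
  fixes lam c t :: real
  assumes "lam > 0" "t \<ge> 0"
  shows "integral {0..t} (\<lambda>r. c * exp (lam * r)) = c * (exp (lam * t) - 1) / lam"
proof -
  have "((\<lambda>r. c * exp (lam * r)) has_integral ((\<lambda>r. c * exp (lam * r) / lam) t - (\<lambda>r. c * exp (lam * r) / lam) 0)) {0..t}"
  proof (rule fundamental_theorem_of_calculus[OF assms(2)])
    fix x assume "x \<in> {0..t}"
    have "((\<lambda>r. c * exp (lam * r) / lam) has_real_derivative (c * (exp (lam * x) * (lam * 1)) / lam)) (at x within {0..t})"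
      using assms by (intro derivative_eq_intros) auto
    then show "((\<lambda>r. c * exp (lam * r) / lam) has_vector_derivative c * exp (lam * x)) (at x within {0..t})"
      using assms by (simp add: has_real_derivative_iff_has_vector_derivative)
  qed
  then have "integral {0..t} (\<lambda>r. c * exp (lam * r)) = c * exp (lam * t) / lam - c * exp (lam * 0) / lam"
    by (rule integral_unique)
  then show ?thesis by (simp add: diff_divide_distrib right_diff_distrib)
qed

lemma dde_exists:
  fixes G :: "real \<Rightarrow> real^4 \<Rightarrow> real^4 \<Rightarrow> real^4" and \<phi> :: "real \<Rightarrow> real^4"
  assumes \<tau>: "\<tau> \<ge> 0" and \<phi>c: "continuous_on {-\<tau>..0} \<phi>"
    and Gc: "\<And>u. continuous_on UNIV u \<Longrightarrow> continuous_on UNIV (\<lambda>r. G r (u r) (u (r - \<tau>)))"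
    and lip: "\<And>t x y x' y'. norm (G t x y - G t x' y') \<le> L * (norm (x - x') + norm (y - y'))"
    and bnd: "\<And>t x y. norm (G t x y) \<le> K"
  shows "\<exists>u. continuous_on UNIV u \<and> (\<forall>\<theta>\<in>{-\<tau>..0}. u \<theta> = \<phi> \<theta>) \<and>
             (\<forall>t\<ge>0. (u has_vector_derivative G t (u t) (u (t - \<tau>))) (at t within {0..}))"
proof -
  define L0 where "L0 = \<bar>L\<bar>"
  have lip0: "norm (G t x y - G t x' y') \<le> L0 * (norm (x - x') + norm (y - y'))" for t x y x' y'
  proof -
    have "L * (norm (x - x') + norm (y - y')) \<le> L0 * (norm (x - x') + norm (y - y'))"
      unfolding L0_def by (intro mult_right_mono) auto
    then show ?thesis using lip[of t x y x' y'] by linarith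
  qed
  have L0: "L0 \<ge> 0" by (simp add: L0_def)
  define lam where "lam = 4 * L0 + 1"
  have lam: "lam > 0" using L0 by (simp add: lam_def)
  define \<psi> where "\<psi> t = \<phi> (max (-\<tau>) (min 0 t))" for t
  have \<psi>c: "continuous_on UNIV \<psi>"
    unfolding \<psi>_def by (rule continuous_on_compose2[OF \<phi>c]) (auto intro!: continuous_intros simp: \<tau>)
  obtain B\<psi> where B\<psi>: "\<And>t. norm (\<psi> t) \<le> B\<psi>"
  proof -
    have "bounded (\<phi> ` {-\<tau>..0})" by (intro compact_imp_bounded compact_continuous_image \<phi>c) auto
    then obtain a where a: "\<forall>x\<in>\<phi> ` {-\<tau>..0}. norm x \<le> a" by (auto simp: bounded_iff)
    have "norm (\<psi> t) \<le> a" for t using a \<tau> unfolding \<psi>_def by auto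
    then show ?thesis using that by blast
  qed
  have K0: "K \<ge> 0" using bnd[of 0 0 0] norm_ge_zero order_trans by blast
  define E where "E w t = exp (lam * max t 0) *\<^sub>R apply_bcontfun w t" for w :: "real \<Rightarrow>\<^sub>C (real^4)" and t
  define g where "g w = (\<lambda>r. G r (E w r) (E w (r - \<tau>)))" for w
  have Ec: "continuous_on UNIV (E w)" for w
    unfolding E_def[abs_def] by (intro continuous_intros continuous_on_apply_bcontfun)
  have gc: "continuous_on UNIV (g w)" for w unfolding g_def using Gc[OF Ec[of w]] .
  define P where "P w = (\<lambda>t. if t \<le> 0 then \<psi> t else exp (- lam * t) *\<^sub>R (\<phi> 0 + integral {0..t} (g w)))" for w
  have Pc: "continuous_on UNIV (P w)" for w
  proof -
    have ci: "continuous_on {0..} (\<lambda>t. integral {0..t} (g w))"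
      by (rule continuous_on_vector_derivative) (rule int_deriv[OF gc], auto)
    have "continuous_on UNIV (\<lambda>t. if t \<le> 0 then \<psi> t else exp (- lam * t) *\<^sub>R (\<phi> 0 + integral {0..t} (g w)))"
    proof (rule continuous_on_cases_le[where h="\<lambda>t. t" and a=0])
      show "continuous_on {t \<in> UNIV. t \<le> 0} \<psi>" by (rule continuous_on_subset[OF \<psi>c]) auto
      have e: "{t \<in> UNIV. 0 \<le> t} = {0::real..}" by auto
      show "continuous_on {t \<in> UNIV. 0 \<le> t} (\<lambda>t. exp (- lam * t) *\<^sub>R (\<phi> 0 + integral {0..t} (g w)))"
        unfolding e using ci by (auto intro!: continuous_intros)
      show "continuous_on UNIV (\<lambda>t::real. t)" by (rule continuous_on_id)
      fix t :: real assume "t \<in> UNIV" "t = 0"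
      then show "\<psi> t = exp (- lam * t) *\<^sub>R (\<phi> 0 + integral {0..t} (g w))" using \<tau> by (simp add: \<psi>_def)
    qed
    then show ?thesis unfolding P_def .
  qed
  have Pb: "norm (P w t) \<le> B\<psi> + norm (\<phi> 0) + K / lam" for w t
  proof (cases "t \<le> 0")
    case True
    have "norm (P w t) = norm (\<psi> t)" by (simp add: P_def True)
    moreover have "K / lam \<ge> 0" using K0 lam by simp
    ultimately show ?thesis using B\<psi>[of t] norm_ge_zero[of "\<phi> 0"] by linarith
  next
    case False
    then have t: "t > 0" by simp
    have I: "norm (integral {0..t} (g w)) \<le> K * (t - 0)"
      by (rule integral_bound) (use t gc bnd in \<open>auto intro: continuous_on_subset simp: g_def\<close>)
    have et: "exp (- lam * t) \<le> 1" using t lam by simp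
    have "lam * t \<le> exp (lam * t)" using exp_ge_add_one_self[of "lam*t"] by linarith
    then have te: "t * exp (- lam * t) \<le> 1 / lam" using lam by (simp add: exp_minus field_simps)
    have "norm (P w t) = exp (- lam * t) * norm (\<phi> 0 + integral {0..t} (g w))" using t by (simp add: P_def)
    also have "\<dots> \<le> exp (- lam * t) * (norm (\<phi> 0) + K * t)"
      using I norm_triangle_ineq[of "\<phi> 0" "integral {0..t} (g w)"] by (intro mult_left_mono) auto
    also have "\<dots> = exp (- lam * t) * norm (\<phi> 0) + K * (t * exp (- lam * t))" by (simp add: algebra_simps)
    also have "\<dots> \<le> 1 * norm (\<phi> 0) + K * (1 / lam)"
      by (intro add_mono mult_left_mono mult_right_mono et te K0) auto
    finally have X: "norm (P w t) \<le> 1 * norm (\<phi> 0) + K * (1 / lam)" .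
    have "K * (1 / lam) = K / lam" by simp
    then show ?thesis using X B\<psi>[of t] norm_ge_zero[of "\<psi> t"] by linarith
  qed
  have Pbc: "P w \<in> bcontfun" for w
    unfolding bcontfun_def using Pc Pb by (auto simp: bounded_iff)
  define \<Phi> where "\<Phi> w = Bcontfun (P w)" for w
  have \<Phi>P: "apply_bcontfun (\<Phi> w) = P w" for w by (simp add: \<Phi>_def Bcontfun_inverse[OF Pbc])
  have contr: "dist (\<Phi> w1) (\<Phi> w2) \<le> (1/2) * dist w1 w2" for w1 w2
  proof (rule dist_bound)
    fix t :: real
    define \<delta> where "\<delta> = dist w1 w2"
    have \<delta>0: "\<delta> \<ge> 0" by (simp add: \<delta>_def)
    have Ed: "norm (E w1 s - E w2 s) \<le> exp (lam * max s 0) * \<delta>" for s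
    proof -
      have "E w1 s - E w2 s = exp (lam * max s 0) *\<^sub>R (apply_bcontfun w1 s - apply_bcontfun w2 s)"
        by (simp add: E_def scaleR_diff_right)
      then have "norm (E w1 s - E w2 s) = exp (lam * max s 0) * dist (apply_bcontfun w1 s) (apply_bcontfun w2 s)"
        by (simp add: dist_norm)
      also have "\<dots> \<le> exp (lam * max s 0) * \<delta>" unfolding \<delta>_def by (intro mult_left_mono dist_bounded) auto
      finally show ?thesis .
    qed
    have gd: "norm (g w1 r - g w2 r) \<le> 2 * L0 * \<delta> * exp (lam * r)" if r: "r \<ge> 0" for r
    proof -
      have "norm (g w1 r - g w2 r) \<le> L0 * (norm (E w1 r - E w2 r) + norm (E w1 (r - \<tau>) - E w2 (r - \<tau>)))"
        unfolding g_def by (rule lip0)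
      also have "\<dots> \<le> L0 * (exp (lam * r) * \<delta> + exp (lam * r) * \<delta>)"
      proof (intro mult_left_mono add_mono L0)
        show "norm (E w1 r - E w2 r) \<le> exp (lam * r) * \<delta>" using Ed[of r] r by simp
        have "max (r - \<tau>) 0 \<le> r" using r \<tau> by auto
        then have "lam * max (r - \<tau>) 0 \<le> lam * r" using lam by (intro mult_left_mono) auto
        then have "exp (lam * max (r - \<tau>) 0) \<le> exp (lam * r)" by simp
        then have "exp (lam * max (r - \<tau>) 0) * \<delta> \<le> exp (lam * r) * \<delta>" using \<delta>0 by (rule mult_right_mono)
        then show "norm (E w1 (r - \<tau>) - E w2 (r - \<tau>)) \<le> exp (lam * r) * \<delta>"
          using Ed[of "r - \<tau>"] by linarith
      qed
      finally show ?thesis by (simp add: algebra_simps)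
    qed
    show "dist (\<Phi> w1 t) (\<Phi> w2 t) \<le> 1/2 * dist w1 w2"
    proof (cases "t \<le> 0")
      case True then show ?thesis by (simp add: \<Phi>P P_def)
    next
      case False
      then have t: "t > 0" by simp
      have int1: "g w1 integrable_on {0..t}" "g w2 integrable_on {0..t}"
        by (auto intro: integrable_continuous_interval continuous_on_subset[OF gc])
      have "\<Phi> w1 t - \<Phi> w2 t = exp (- lam * t) *\<^sub>R (integral {0..t} (g w1) - integral {0..t} (g w2))"
        using t by (simp add: \<Phi>P P_def scaleR_diff_right scaleR_add_right)
      also have "integral {0..t} (g w1) - integral {0..t} (g w2) = integral {0..t} (\<lambda>r. g w1 r - g w2 r)"
        using int1 by (simp add: integral_diff)
      finally have eq: "dist (\<Phi> w1 t) (\<Phi> w2 t) = exp (- lam * t) * norm (integral {0..t} (\<lambda>r. g w1 r - g w2 r))"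
        by (simp add: dist_norm)
      define c where "c = 2 * L0 * \<delta>"
      have c0: "c \<ge> 0" using L0 \<delta>0 by (simp add: c_def)
      have "norm (integral {0..t} (\<lambda>r. g w1 r - g w2 r)) \<le> integral {0..t} (\<lambda>r. c * exp (lam * r))"
      proof (rule Henstock_Kurzweil_Integration.integral_norm_bound_integral)
        show "(\<lambda>r. g w1 r - g w2 r) integrable_on {0..t}" using int1 by (rule integrable_diff)
        show "(\<lambda>r. c * exp (lam * r)) integrable_on {0..t}"
          by (intro integrable_continuous_interval continuous_intros)
        fix r assume "r \<in> {0..t}"
        then show "norm (g w1 r - g w2 r) \<le> c * exp (lam * r)" using gd[of r] by (simp add: c_def)
      qed
      also have "\<dots> = c * (exp (lam * t) - 1) / lam" using int_exp[OF lam, of t c] t by simp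
      finally have n: "norm (integral {0..t} (\<lambda>r. g w1 r - g w2 r)) \<le> c * (exp (lam * t) - 1) / lam" .
      have e1: "exp (- lam * t) * exp (lam * t) = 1" by (simp flip: exp_add)
      have "dist (\<Phi> w1 t) (\<Phi> w2 t) \<le> exp (- lam * t) * (c * (exp (lam * t) - 1) / lam)"
        unfolding eq by (intro mult_left_mono n) auto
      also have "\<dots> = c * (exp (- lam * t) * exp (lam * t) - exp (- lam * t)) / lam"
        by (simp add: algebra_simps)
      also have "\<dots> = c * (1 - exp (- lam * t)) / lam" by (simp only: e1)
      also have "\<dots> \<le> c * 1 / lam"
        using c0 lam by (intro divide_right_mono mult_left_mono) auto
      also have "\<dots> \<le> \<delta> / 2"
        using lam L0 \<delta>0 by (simp add: c_def lam_def divide_le_eq field_simps)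
      finally show ?thesis by (simp add: \<delta>_def)
    qed
  qed
  obtain w where w: "\<Phi> w = w"
    using banach_fix_type[of "1/2" \<Phi>] contr by auto
  have wP: "apply_bcontfun w t = P w t" for t using \<Phi>P[of w] w by simp
  define u where "u = E w"
  have uc: "continuous_on UNIV u" unfolding u_def by (rule Ec)
  have uinit: "u \<theta> = \<phi> \<theta>" if "\<theta> \<in> {-\<tau>..0}" for \<theta>
    using that wP[of \<theta>] by (simp add: u_def E_def P_def \<psi>_def)
  have uint: "u t = \<phi> 0 + integral {0..t} (g w)" if t: "t \<ge> 0" for t
  proof (cases "t = 0")
    case True then show ?thesis using wP[of 0] \<tau> by (simp add: u_def E_def P_def \<psi>_def)
  next
    case False
    then have "t > 0" using t by simp
    then show ?thesis using wP[of t] by (simp add: u_def E_def P_def flip: exp_add)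
  qed
  have gu: "g w r = G r (u r) (u (r - \<tau>))" for r by (simp add: g_def u_def)
  have "(u has_vector_derivative G t (u t) (u (t - \<tau>))) (at t within {0..})" if t: "t \<ge> 0" for t
  proof -
    have "((\<lambda>s. \<phi> 0 + integral {0..s} (g w)) has_vector_derivative g w t) (at t within {0..})"
      using int_deriv[OF gc t] by (simp only: has_vector_derivative_add_const add.commute[of "\<phi> 0"])
    then have "(u has_vector_derivative g w t) (at t within {0..})"
      by (rule has_vector_derivative_transform_within[where d=1]) (use t uint in auto)
    then show ?thesis by (simp add: gu)
  qed
  then show ?thesis using uc uinit by blast
qed

lemma vec_mvt:
  fixes f :: "real \<Rightarrow> 'a::real_normed_vector"
  assumes ab: "a \<le> b"
    and d: "\<And>x. x \<in> {a..b} \<Longrightarrow> (f has_vector_derivative f' x) (at x within {a..b})"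
    and B: "\<And>x. x \<in> {a..b} \<Longrightarrow> norm (f' x) \<le> B"
  shows "norm (f b - f a) \<le> B * (b - a)"
proof -
  have "norm (f b - f a) \<le> B * norm (b - a)"
  proof (rule differentiable_bound[of "{a..b}" f "\<lambda>x h. h *\<^sub>R f' x" B b a])
    fix x assume x: "x \<in> {a..b}"
    show "(f has_derivative (\<lambda>h. h *\<^sub>R f' x)) (at x within {a..b})"
      using d[OF x] by (simp add: has_vector_derivative_def)
    have "onorm (\<lambda>h::real. h *\<^sub>R f' x) = onorm (\<lambda>h::real. h) * norm (f' x)"
      by (rule onorm_scaleR_left) (rule bounded_linear_ident)
    then show "onorm (\<lambda>h::real. h *\<^sub>R f' x) \<le> B" using B[OF x] by (simp add: onorm_id)
  qed (use ab in auto)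
  then show ?thesis using ab by simp
qed

lemma dde_unique:
  fixes x y :: "real \<Rightarrow> 'a::real_normed_vector"
  assumes \<tau>: "\<tau> \<ge> 0"
    and xc: "continuous_on {-\<tau>..} x" and yc: "continuous_on {-\<tau>..} y"
    and init: "\<And>\<theta>. \<theta> \<in> {-\<tau>..0} \<Longrightarrow> x \<theta> = y \<theta>"
    and dx: "\<And>t. t \<ge> 0 \<Longrightarrow> (x has_vector_derivative fx t) (at t within {0..})"
    and dy: "\<And>t. t \<ge> 0 \<Longrightarrow> (y has_vector_derivative fy t) (at t within {0..})"
    and lipT: "\<And>T. \<exists>L. \<forall>t\<in>{0..T}. norm (fx t - fy t) \<le> L * (norm (x t - y t) + norm (x (t - \<tau>) - y (t - \<tau>)))"
  shows "\<And>t. t \<ge> -\<tau> \<Longrightarrow> x t = y t"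
proof -
  have main: "x t = y t" if T: "T \<ge> 0" and t: "-\<tau> \<le> t" "t \<le> T" for T t
  proof -
    obtain L where L: "\<forall>t\<in>{0..T}. norm (fx t - fy t) \<le> L * (norm (x t - y t) + norm (x (t - \<tau>) - y (t - \<tau>)))"
      using lipT by blast
    define L0 where "L0 = \<bar>L\<bar>"
    have L0: "L0 \<ge> 0" by (simp add: L0_def)
    have lip0: "norm (fx t - fy t) \<le> L0 * (norm (x t - y t) + norm (x (t - \<tau>) - y (t - \<tau>)))" if "t \<in> {0..T}" for t
    proof -
      have "L * (norm (x t - y t) + norm (x (t - \<tau>) - y (t - \<tau>))) \<le> L0 * (norm (x t - y t) + norm (x (t - \<tau>) - y (t - \<tau>)))"
        unfolding L0_def by (intro mult_right_mono) auto
      then show ?thesis using L that by fastforce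
    qed
    define h where "h = 1 / (4 * L0 + 4)"
    have h: "h > 0" using L0 by (simp add: h_def)
    have step: "\<forall>t. -\<tau> \<le> t \<and> t \<le> min T (real n * h) \<longrightarrow> x t = y t" for n
    proof (induction n)
      case 0
      then show ?case using T init by auto
    next
      case (Suc n)
      define s0 where "s0 = min T (real n * h)"
      define s1 where "s1 = min T (real (Suc n) * h)"
      have s0: "0 \<le> s0" "s0 \<le> s1" "s1 - s0 \<le> h" "s1 \<le> T"
        using T h by (auto simp: s0_def s1_def algebra_simps min_def)
      have IH: "x t = y t" if "-\<tau> \<le> t" "t \<le> s0" for t using Suc.IH that by (simp add: s0_def)
      define D where "D = {s0..s1}"
      have Dsub: "D \<subseteq> {-\<tau>..}" using s0 \<tau> by (auto simp: D_def)
      have "continuous_on D (\<lambda>t. norm (x t - y t))"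
        using Dsub by (intro continuous_intros continuous_on_subset[OF xc] continuous_on_subset[OF yc]) auto
      then obtain m where m: "m \<in> D" "\<And>r. r \<in> D \<Longrightarrow> norm (x r - y r) \<le> norm (x m - y m)"
        using continuous_attains_sup[of D "\<lambda>t. norm (x t - y t)"] s0 by (auto simp: D_def)
      define M where "M = norm (x m - y m)"
      have bd: "norm (fx r - fy r) \<le> L0 * (M + M)" if r: "r \<in> D" for r
      proof -
        have "norm (fx r - fy r) \<le> L0 * (norm (x r - y r) + norm (x (r - \<tau>) - y (r - \<tau>)))"
          using r s0 by (intro lip0) (auto simp: D_def)
        also have "\<dots> \<le> L0 * (M + M)"
        proof (intro mult_left_mono add_mono L0)
          show "norm (x r - y r) \<le> M" using m(2)[OF r] by (simp add: M_def)
          show "norm (x (r - \<tau>) - y (r - \<tau>)) \<le> M"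
          proof (cases "r - \<tau> \<le> s0")
            case True
            then have "x (r - \<tau>) = y (r - \<tau>)" using r s0 by (intro IH) (auto simp: D_def)
            then show ?thesis by (simp add: M_def)
          next
            case False
            then have "r - \<tau> \<in> D" using r \<tau> by (auto simp: D_def)
            then show ?thesis using m(2) by (simp add: M_def)
          qed
        qed
        finally show ?thesis .
      qed
      have M0: "M \<ge> 0" by (simp add: M_def)
      have dist_bd: "norm (x r - y r) \<le> L0 * (M + M) * h" if r: "r \<in> D" for r
      proof -
        have "norm ((x r - y r) - (x s0 - y s0)) \<le> L0 * (M + M) * (r - s0)"
        proof (rule vec_mvt)
          show "s0 \<le> r" using r by (simp add: D_def)
          fix z assume z: "z \<in> {s0..r}"
          then have z0: "z \<ge> 0" "z \<in> D" using s0 r by (auto simp: D_def)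
          have sub: "{s0..r} \<subseteq> {0..}" using s0 by auto
          show "((\<lambda>t. x t - y t) has_vector_derivative fx z - fy z) (at z within {s0..r})"
            by (intro has_vector_derivative_diff has_vector_derivative_within_subset[OF dx sub]
                has_vector_derivative_within_subset[OF dy sub] z0)
          show "norm (fx z - fy z) \<le> L0 * (M + M)" using bd[OF z0(2)] .
        qed
        moreover have "x s0 - y s0 = 0" using IH[of s0] \<tau> s0 by simp
        moreover have "L0 * (M + M) * (r - s0) \<le> L0 * (M + M) * h"
          using r s0 L0 M0 by (intro mult_left_mono) (auto simp: D_def)
        ultimately show ?thesis by simp
      qed
      have "M \<le> L0 * (M + M) * h" using dist_bd[OF m(1)] by (simp add: M_def)
      also have "\<dots> = M * (2 * L0 / (4 * L0 + 4))" by (simp add: h_def algebra_simps)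
      also have "\<dots> \<le> M * (1/2)"
        using L0 M0 by (intro mult_left_mono) (auto simp: divide_le_eq)
      finally have "M = 0" using M0 by simp
      show ?case
      proof (intro allI impI)
        fix t assume t: "-\<tau> \<le> t \<and> t \<le> min T (real (Suc n) * h)"
        show "x t = y t"
        proof (cases "t \<le> s0")
          case True then show ?thesis using IH t by auto
        next
          case False
          then have "t \<in> D" using t by (auto simp: D_def s1_def)
          then have "norm (x t - y t) \<le> M" using m(2) by (simp add: M_def)
          then show ?thesis using \<open>M = 0\<close> by simp
        qed
      qed
    qed
    obtain n where n: "T / h < real n" using reals_Archimedean2 by blast
    then have "T \<le> real n * h" using h by (simp add: divide_less_eq less_imp_le)
    then show ?thesis using step[of n] t by auto
  qed
  fix t assume "t \<ge> -\<tau>"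
  then show "x t = y t" using main[of "max t 0" t] by auto
qed

lemma rhs_c:
  "rhs \<beta>h \<beta>v \<mu>h \<mu>v Cvh Chv z w $ 1 = \<beta>h - Cvh * (z $ 4 / (z $ 3 + z $ 4)) * z $ 1 - \<mu>h * z $ 1"
  "rhs \<beta>h \<beta>v \<mu>h \<mu>v Cvh Chv z w $ 2 = Cvh * (w $ 4 / (w $ 3 + w $ 4)) * w $ 1 - \<mu>h * z $ 2"
  "rhs \<beta>h \<beta>v \<mu>h \<mu>v Cvh Chv z w $ 3 = \<beta>v - Chv * z $ 2 * z $ 3 - \<mu>v * z $ 3"
  "rhs \<beta>h \<beta>v \<mu>h \<mu>v Cvh Chv z w $ 4 = Chv * z $ 2 * z $ 3 - \<mu>v * z $ 4"
  by (simp_all add: rhs_def)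

lemma prod_diff:
  fixes a b a' b' :: real
  shows "\<bar>a * b - a' * b'\<bar> \<le> \<bar>a\<bar> * \<bar>b - b'\<bar> + \<bar>b'\<bar> * \<bar>a - a'\<bar>"
proof -
  have "a * b - a' * b' = a * (b - b') + b' * (a - a')" by (simp add: algebra_simps)
  then have "\<bar>a * b - a' * b'\<bar> \<le> \<bar>a * (b - b')\<bar> + \<bar>b' * (a - a')\<bar>" by simp
  then show ?thesis by (simp add: abs_mult)
qed

lemma prod_lip:
  fixes a b a' b' R d :: real
  assumes "\<bar>a\<bar> \<le> R" "\<bar>b'\<bar> \<le> R" "\<bar>a - a'\<bar> \<le> d" "\<bar>b - b'\<bar> \<le> d"
  shows "\<bar>a * b - a' * b'\<bar> \<le> 2 * R * d"
proof -
  have "\<bar>a\<bar> * \<bar>b - b'\<bar> \<le> R * d" using assms by (intro mult_mono) auto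
  moreover have "\<bar>b'\<bar> * \<bar>a - a'\<bar> \<le> R * d" using assms by (intro mult_mono) auto
  ultimately show ?thesis using prod_diff[of a b a' b'] by linarith
qed

lemma tri1:
  fixes C m A B :: real
  assumes "C \<ge> 0" "m \<ge> 0"
  shows "\<bar>C * A - m * B\<bar> \<le> C * \<bar>A\<bar> + m * \<bar>B\<bar>"
    and "\<bar>- C * A - m * B\<bar> \<le> C * \<bar>A\<bar> + m * \<bar>B\<bar>"
proof -
  have "\<bar>C * A - m * B\<bar> \<le> \<bar>C * A\<bar> + \<bar>m * B\<bar>" by (rule abs_triangle_ineq4)
  then show "\<bar>C * A - m * B\<bar> \<le> C * \<bar>A\<bar> + m * \<bar>B\<bar>" using assms by (simp add: abs_mult)
  have "\<bar>- C * A - m * B\<bar> \<le> \<bar>- C * A\<bar> + \<bar>m * B\<bar>" by (rule abs_triangle_ineq4)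
  then show "\<bar>- C * A - m * B\<bar> \<le> C * \<bar>A\<bar> + m * \<bar>B\<bar>" using assms by (simp add: abs_mult)
qed

lemma rhs_lip:
  fixes z w z' w' :: "real^4"
  assumes par: "\<mu>h > 0" "\<mu>v > 0" "Cvh > 0" "Chv > 0" and n0: "n0 > 0"
    and R: "norm z \<le> R" "norm w \<le> R" "norm z' \<le> R" "norm w' \<le> R"
    and N: "z $ 3 + z $ 4 = z' $ 3 + z' $ 4" "z $ 3 + z $ 4 \<ge> n0"
    and Nd: "w $ 3 + w $ 4 = w' $ 3 + w' $ 4" "w $ 3 + w $ 4 \<ge> n0"
  shows "norm (rhs \<beta>h \<beta>v \<mu>h \<mu>v Cvh Chv z w - rhs \<beta>h \<beta>v \<mu>h \<mu>v Cvh Chv z' w')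
         \<le> (4 * Cvh * R / n0 + 2 * \<mu>h + 4 * Chv * R + 2 * \<mu>v) * (norm (z - z') + norm (w - w'))"
proof -
  define dz where "dz = norm (z - z')"
  define dw where "dw = norm (w - w')"
  have dz: "\<bar>z $ i - z' $ i\<bar> \<le> dz" for i unfolding dz_def using component_le_norm_cart[of "z - z'" i] by simp
  have dw: "\<bar>w $ i - w' $ i\<bar> \<le> dw" for i unfolding dw_def using component_le_norm_cart[of "w - w'" i] by simp
  have Rz: "\<bar>z $ i\<bar> \<le> R" "\<bar>z' $ i\<bar> \<le> R" "\<bar>w $ i\<bar> \<le> R" "\<bar>w' $ i\<bar> \<le> R" for i
    using R component_le_norm_cart order_trans by metis+
  have dz0: "dz \<ge> 0" "dw \<ge> 0" by (auto simp: dz_def dw_def)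
  define N1 where "N1 = z $ 3 + z $ 4"
  define N2 where "N2 = w $ 3 + w $ 4"
  have N1: "N1 \<ge> n0" "z' $ 3 + z' $ 4 = N1" using N by (auto simp: N1_def)
  have N2: "N2 \<ge> n0" "w' $ 3 + w' $ 4 = N2" using Nd by (auto simp: N2_def)
  have ratio: "\<bar>(a / N) * b - (a' / N) * b'\<bar> \<le> 2 * R * d / n0"
    if "\<bar>a\<bar> \<le> R" "\<bar>b'\<bar> \<le> R" "\<bar>a - a'\<bar> \<le> d" "\<bar>b - b'\<bar> \<le> d" "N \<ge> n0" for a b a' b' d N
  proof -
    have Np: "N > 0" using that n0 by linarith
    have "(a / N) * b - (a' / N) * b' = (a * b - a' * b') / N" by (simp add: diff_divide_distrib)
    then have "\<bar>(a / N) * b - (a' / N) * b'\<bar> = \<bar>a * b - a' * b'\<bar> / N" using Np by simp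
    also have "\<dots> \<le> 2 * R * d / N" using prod_lip[OF that(1-4)] Np by (simp add: divide_right_mono)
    also have "\<dots> \<le> 2 * R * d / n0"
      using that n0 prod_lip[OF that(1-4)] by (intro divide_left_mono) auto
    finally show ?thesis .
  qed
  have c1: "\<bar>rhs \<beta>h \<beta>v \<mu>h \<mu>v Cvh Chv z w $ 1 - rhs \<beta>h \<beta>v \<mu>h \<mu>v Cvh Chv z' w' $ 1\<bar>
      \<le> Cvh * (2 * R * dz / n0) + \<mu>h * dz"
  proof -
    have "rhs \<beta>h \<beta>v \<mu>h \<mu>v Cvh Chv z w $ 1 - rhs \<beta>h \<beta>v \<mu>h \<mu>v Cvh Chv z' w' $ 1
       = - Cvh * ((z $ 4 / N1) * z $ 1 - (z' $ 4 / N1) * z' $ 1) - \<mu>h * (z $ 1 - z' $ 1)"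
      using N1 by (simp add: rhs_c N1_def algebra_simps)
    also have "\<bar>\<dots>\<bar> \<le> Cvh * \<bar>(z $ 4 / N1) * z $ 1 - (z' $ 4 / N1) * z' $ 1\<bar> + \<mu>h * \<bar>z $ 1 - z' $ 1\<bar>"
      using par by (intro tri1) auto
    also have "\<dots> \<le> Cvh * (2 * R * dz / n0) + \<mu>h * dz"
      using par by (intro add_mono mult_left_mono ratio Rz dz N1) auto
    finally show ?thesis .
  qed
  have c2: "\<bar>rhs \<beta>h \<beta>v \<mu>h \<mu>v Cvh Chv z w $ 2 - rhs \<beta>h \<beta>v \<mu>h \<mu>v Cvh Chv z' w' $ 2\<bar>
      \<le> Cvh * (2 * R * dw / n0) + \<mu>h * dz"
  proof -
    have "rhs \<beta>h \<beta>v \<mu>h \<mu>v Cvh Chv z w $ 2 - rhs \<beta>h \<beta>v \<mu>h \<mu>v Cvh Chv z' w' $ 2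
       = Cvh * ((w $ 4 / N2) * w $ 1 - (w' $ 4 / N2) * w' $ 1) - \<mu>h * (z $ 2 - z' $ 2)"
      using N2 by (simp add: rhs_c N2_def algebra_simps)
    also have "\<bar>\<dots>\<bar> \<le> Cvh * \<bar>(w $ 4 / N2) * w $ 1 - (w' $ 4 / N2) * w' $ 1\<bar> + \<mu>h * \<bar>z $ 2 - z' $ 2\<bar>"
      using par by (intro tri1) auto
    also have "\<dots> \<le> Cvh * (2 * R * dw / n0) + \<mu>h * dz"
      using par by (intro add_mono mult_left_mono ratio Rz dz dw N2) auto
    finally show ?thesis .
  qed
  have c3: "\<bar>rhs \<beta>h \<beta>v \<mu>h \<mu>v Cvh Chv z w $ 3 - rhs \<beta>h \<beta>v \<mu>h \<mu>v Cvh Chv z' w' $ 3\<bar>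
      \<le> Chv * (2 * R * dz) + \<mu>v * dz"
  proof -
    have "rhs \<beta>h \<beta>v \<mu>h \<mu>v Cvh Chv z w $ 3 - rhs \<beta>h \<beta>v \<mu>h \<mu>v Cvh Chv z' w' $ 3
       = - Chv * (z $ 2 * z $ 3 - z' $ 2 * z' $ 3) - \<mu>v * (z $ 3 - z' $ 3)"
      by (simp add: rhs_c algebra_simps)
    also have "\<bar>\<dots>\<bar> \<le> Chv * \<bar>z $ 2 * z $ 3 - z' $ 2 * z' $ 3\<bar> + \<mu>v * \<bar>z $ 3 - z' $ 3\<bar>"
      using par by (intro tri1) auto
    also have "\<dots> \<le> Chv * (2 * R * dz) + \<mu>v * dz"
      using par by (intro add_mono mult_left_mono prod_lip Rz dz) auto
    finally show ?thesis .
  qed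
  have c4: "\<bar>rhs \<beta>h \<beta>v \<mu>h \<mu>v Cvh Chv z w $ 4 - rhs \<beta>h \<beta>v \<mu>h \<mu>v Cvh Chv z' w' $ 4\<bar>
      \<le> Chv * (2 * R * dz) + \<mu>v * dz"
  proof -
    have "rhs \<beta>h \<beta>v \<mu>h \<mu>v Cvh Chv z w $ 4 - rhs \<beta>h \<beta>v \<mu>h \<mu>v Cvh Chv z' w' $ 4
       = Chv * (z $ 2 * z $ 3 - z' $ 2 * z' $ 3) - \<mu>v * (z $ 4 - z' $ 4)"
      by (simp add: rhs_c algebra_simps)
    also have "\<bar>\<dots>\<bar> \<le> Chv * \<bar>z $ 2 * z $ 3 - z' $ 2 * z' $ 3\<bar> + \<mu>v * \<bar>z $ 4 - z' $ 4\<bar>"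
      using par by (intro tri1) auto
    also have "\<dots> \<le> Chv * (2 * R * dz) + \<mu>v * dz"
      using par by (intro add_mono mult_left_mono prod_lip Rz dz) auto
    finally show ?thesis .
  qed
  have "norm (rhs \<beta>h \<beta>v \<mu>h \<mu>v Cvh Chv z w - rhs \<beta>h \<beta>v \<mu>h \<mu>v Cvh Chv z' w')
      \<le> (\<Sum>i\<in>UNIV. \<bar>(rhs \<beta>h \<beta>v \<mu>h \<mu>v Cvh Chv z w - rhs \<beta>h \<beta>v \<mu>h \<mu>v Cvh Chv z' w') $ i\<bar>)"
    by (rule norm_le_l1_cart)
  also have "\<dots> \<le> (Cvh * (2 * R * dz / n0) + \<mu>h * dz) + (Cvh * (2 * R * dw / n0) + \<mu>h * dz)
      + (Chv * (2 * R * dz) + \<mu>v * dz) + (Chv * (2 * R * dz) + \<mu>v * dz)"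
    unfolding sum_4 using c1 c2 c3 c4 by simp
  also have "\<dots> \<le> (4 * Cvh * R / n0 + 2 * \<mu>h + 4 * Chv * R + 2 * \<mu>v) * (dz + dw)"
  proof -
    have R0: "R \<ge> 0" using R(1) norm_ge_zero order_trans by blast
    have "(4 * Cvh * R / n0 + 2 * \<mu>h + 4 * Chv * R + 2 * \<mu>v) * (dz + dw)
        - ((Cvh * (2 * R * dz / n0) + \<mu>h * dz) + (Cvh * (2 * R * dw / n0) + \<mu>h * dz)
      + (Chv * (2 * R * dz) + \<mu>v * dz) + (Chv * (2 * R * dz) + \<mu>v * dz))
       = 2 * Cvh * R * dz / n0 + 2 * Cvh * R * dw / n0 + 2 * \<mu>h * dw + 4 * Chv * R * dw + 2 * \<mu>v * dw"
      using n0 by (simp add: field_simps)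
    moreover have "2 * Cvh * R * dz / n0 + 2 * Cvh * R * dw / n0 + 2 * \<mu>h * dw + 4 * Chv * R * dw + 2 * \<mu>v * dw \<ge> 0"
      using par n0 R0 dz0 by (intro add_nonneg_nonneg mult_nonneg_nonneg divide_nonneg_pos) auto
    ultimately show ?thesis by linarith
  qed
  finally show ?thesis by (simp add: dz_def dw_def)
qed

definition clampt :: "real \<Rightarrow> real \<Rightarrow> real" where
  "clampt \<tau> t = max (-\<tau>) (min 0 t)"

definition nfun :: "real \<Rightarrow> real \<Rightarrow> real \<Rightarrow> (real \<Rightarrow> real^4) \<Rightarrow> real \<Rightarrow> real" where
  "nfun \<beta>v \<mu>v \<tau> \<phi> t = (if t \<le> 0 then \<phi> (clampt \<tau> t) $ 3 + \<phi> (clampt \<tau> t) $ 4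
     else \<beta>v/\<mu>v + (\<phi> 0 $ 3 + \<phi> 0 $ 4 - \<beta>v/\<mu>v) * exp (- \<mu>v * t))"

lemma clampt_in: "\<tau> \<ge> 0 \<Longrightarrow> clampt \<tau> t \<in> {-\<tau>..0}"
  by (auto simp: clampt_def)

lemma clampt_id: "t \<in> {-\<tau>..0} \<Longrightarrow> clampt \<tau> t = t"
  by (auto simp: clampt_def)

lemma nfun_props:
  assumes par: "\<beta>v > 0" "\<mu>v > 0" and \<tau>: "\<tau> \<ge> 0" and C: "in_Cplus \<tau> \<phi>"
  shows "\<exists>n0>0. \<forall>t. nfun \<beta>v \<mu>v \<tau> \<phi> t \<ge> n0"
    and "continuous_on UNIV (nfun \<beta>v \<mu>v \<tau> \<phi>)"
proof -
  have \<phi>c: "continuous_on {-\<tau>..0} \<phi>" and pos: "\<And>\<theta>. \<theta> \<in> {-\<tau>..0} \<Longrightarrow> \<phi> \<theta> $ 3 + \<phi> \<theta> $ 4 > 0"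
    using C by (auto simp: in_Cplus_def)
  have "continuous_on {-\<tau>..0} (\<lambda>\<theta>. \<phi> \<theta> $ 3 + \<phi> \<theta> $ 4)" by (intro continuous_intros \<phi>c)
  then obtain m where m: "m \<in> {-\<tau>..0}" "\<And>\<theta>. \<theta> \<in> {-\<tau>..0} \<Longrightarrow> \<phi> m $ 3 + \<phi> m $ 4 \<le> \<phi> \<theta> $ 3 + \<phi> \<theta> $ 4"
    using continuous_attains_inf[of "{-\<tau>..0}" "\<lambda>\<theta>. \<phi> \<theta> $ 3 + \<phi> \<theta> $ 4"] \<tau> by auto
  define p0 where "p0 = \<phi> m $ 3 + \<phi> m $ 4"
  have p0: "p0 > 0" using pos[OF m(1)] by (simp add: p0_def)
  define a where "a = \<beta>v / \<mu>v"
  define N0 where "N0 = \<phi> 0 $ 3 + \<phi> 0 $ 4"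
  have a: "a > 0" using par by (simp add: a_def)
  have N0: "N0 > 0" using pos[of 0] \<tau> by (simp add: N0_def)
  define n0 where "n0 = min p0 (min N0 a)"
  have "n0 > 0" using p0 N0 a by (simp add: n0_def)
  moreover have "nfun \<beta>v \<mu>v \<tau> \<phi> t \<ge> n0" for t
  proof (cases "t \<le> 0")
    case True
    have h: "p0 \<le> \<phi> (clampt \<tau> t) $ 3 + \<phi> (clampt \<tau> t) $ 4"
      using m(2)[OF clampt_in[OF \<tau>, of t]] by (simp add: p0_def)
    have "n0 \<le> p0" by (simp add: n0_def)
    then show ?thesis using h True by (simp add: nfun_def)
  next
    case False
    define e where "e = exp (- \<mu>v * t)"
    have e: "0 < e" "e \<le> 1" using False par by (auto simp: e_def)
    have eq: "nfun \<beta>v \<mu>v \<tau> \<phi> t = a + (N0 - a) * e" using False by (simp add: nfun_def a_def N0_def e_def)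
    show ?thesis
    proof (cases "N0 \<ge> a")
      case True
      then have "(N0 - a) * e \<ge> 0" using e by simp
      then show ?thesis using eq by (simp add: n0_def)
    next
      case False
      then have "(N0 - a) * e \<ge> (N0 - a) * 1" using e by (intro mult_left_mono_neg) auto
      then show ?thesis using eq by (simp add: n0_def)
    qed
  qed
  ultimately show "\<exists>n0>0. \<forall>t. nfun \<beta>v \<mu>v \<tau> \<phi> t \<ge> n0" by blast
  have cc: "continuous_on UNIV (\<lambda>t. \<phi> (clampt \<tau> t) $ 3 + \<phi> (clampt \<tau> t) $ 4)"
  proof -
    have "continuous_on UNIV (\<lambda>t. \<phi> (clampt \<tau> t))"
      unfolding clampt_def by (rule continuous_on_compose2[OF \<phi>c]) (auto intro!: continuous_intros simp: \<tau>)
    then show ?thesis by (intro continuous_intros)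
  qed
  have "continuous_on UNIV (\<lambda>t. if t \<le> 0 then \<phi> (clampt \<tau> t) $ 3 + \<phi> (clampt \<tau> t) $ 4
     else \<beta>v/\<mu>v + (\<phi> 0 $ 3 + \<phi> 0 $ 4 - \<beta>v/\<mu>v) * exp (- \<mu>v * t))"
  proof (rule continuous_on_cases_le[where h="\<lambda>t. t" and a=0])
    show "continuous_on {t \<in> UNIV. t \<le> 0} (\<lambda>t. \<phi> (clampt \<tau> t) $ 3 + \<phi> (clampt \<tau> t) $ 4)"
      by (rule continuous_on_subset[OF cc]) auto
    show "continuous_on {t \<in> UNIV. 0 \<le> t} (\<lambda>t. \<beta>v/\<mu>v + (\<phi> 0 $ 3 + \<phi> 0 $ 4 - \<beta>v/\<mu>v) * exp (- \<mu>v * t))"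
      by (intro continuous_intros)
    show "continuous_on UNIV (\<lambda>t::real. t)" by (rule continuous_on_id)
    fix t :: real assume "t \<in> UNIV" "t = 0"
    then show "\<phi> (clampt \<tau> t) $ 3 + \<phi> (clampt \<tau> t) $ 4 = \<beta>v/\<mu>v + (\<phi> 0 $ 3 + \<phi> 0 $ 4 - \<beta>v/\<mu>v) * exp (- \<mu>v * t)"
      using \<tau> by (simp add: clampt_def)
  qed
  then show "continuous_on UNIV (nfun \<beta>v \<mu>v \<tau> \<phi>)" unfolding nfun_def[abs_def] .
qed

lemma sol_sum:
  assumes par: "\<mu>v > 0" and \<tau>: "\<tau> \<ge> 0"
    and sol: "is_solution \<beta>h \<beta>v \<mu>h \<mu>v Cvh Chv \<tau> \<phi> x"
    and s: "s \<ge> -\<tau>"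
  shows "x s $ 3 + x s $ 4 = nfun \<beta>v \<mu>v \<tau> \<phi> s"
proof -
  have init: "\<And>\<theta>. \<theta> \<in> {-\<tau>..0} \<Longrightarrow> x \<theta> = \<phi> \<theta>"
    and der: "\<And>t. t \<ge> 0 \<Longrightarrow> (x has_vector_derivative rhs \<beta>h \<beta>v \<mu>h \<mu>v Cvh Chv (x t) (x (t - \<tau>))) (at t within {0..})"
    using sol by (auto simp: is_solution_def)
  have d: "((\<lambda>s. x s $ 3 + x s $ 4) has_real_derivative (\<beta>v - \<mu>v * (x t $ 3 + x t $ 4))) (at t within {0..})"
    if t: "t \<ge> 0" for t
  proof -
    have "((\<lambda>s. x s $ 3 + x s $ 4) has_real_derivative
        (rhs \<beta>h \<beta>v \<mu>h \<mu>v Cvh Chv (x t) (x (t - \<tau>)) $ 3 + rhs \<beta>h \<beta>v \<mu>h \<mu>v Cvh Chv (x t) (x (t - \<tau>)) $ 4)) (at t within {0..})"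
      by (intro DERIV_add comp_deriv der t)
    then show ?thesis by (simp add: rhs_c algebra_simps)
  qed
  have f: "x t $ 3 + x t $ 4 = \<beta>v/\<mu>v + ((x 0 $ 3 + x 0 $ 4) - \<beta>v/\<mu>v) * exp(-\<mu>v*t)" if "t \<ge> 0" for t
    using lin_formula[where f="\<lambda>s. x s $ 3 + x s $ 4" and b=\<mu>v and A=\<beta>v, OF par d that] by simp
  have x0: "x 0 = \<phi> 0" using init[of 0] \<tau> by simp
  show ?thesis
  proof (cases "s \<le> 0")
    case True
    then have "s \<in> {-\<tau>..0}" using s by simp
    then show ?thesis using init[of s] clampt_id[of s \<tau>] True by (simp add: nfun_def)
  next
    case False
    then show ?thesis using f[of s] x0 by (simp add: nfun_def)
  qed
qed

lemma sol_unique: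
  assumes par: "\<mu>h > 0" "\<mu>v > 0" "Cvh > 0" "Chv > 0" "\<beta>v > 0" and \<tau>: "\<tau> \<ge> 0"
    and C: "in_Cplus \<tau> \<phi>"
    and solx: "is_solution \<beta>h \<beta>v \<mu>h \<mu>v Cvh Chv \<tau> \<phi> x"
    and soly: "is_solution \<beta>h \<beta>v \<mu>h \<mu>v Cvh Chv \<tau> \<phi> y"
  shows "\<forall>t\<ge>-\<tau>. x t = y t"
proof -
  obtain n0 where n0: "n0 > 0" "\<And>t. nfun \<beta>v \<mu>v \<tau> \<phi> t \<ge> n0" using nfun_props(1)[OF par(5,2) \<tau> C] by blast
  have xc: "continuous_on {-\<tau>..} x" and yc: "continuous_on {-\<tau>..} y"
    using solx soly by (auto simp: is_solution_def)
  have sx: "\<And>s. s \<ge> -\<tau> \<Longrightarrow> x s $ 3 + x s $ 4 = nfun \<beta>v \<mu>v \<tau> \<phi> s"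
    using sol_sum[OF par(2) \<tau> solx] by blast
  have sy: "\<And>s. s \<ge> -\<tau> \<Longrightarrow> y s $ 3 + y s $ 4 = nfun \<beta>v \<mu>v \<tau> \<phi> s"
    using sol_sum[OF par(2) \<tau> soly] by blast
  show ?thesis
  proof (intro allI impI)
    fix t :: real assume t: "t \<ge> -\<tau>"
    show "x t = y t"
    proof (rule dde_unique[OF \<tau> xc yc _ _ _ _ t])
      show "\<And>\<theta>. \<theta> \<in> {-\<tau>..0} \<Longrightarrow> x \<theta> = y \<theta>" using solx soly by (auto simp: is_solution_def)
      show "\<And>t. t \<ge> 0 \<Longrightarrow> (x has_vector_derivative rhs \<beta>h \<beta>v \<mu>h \<mu>v Cvh Chv (x t) (x (t - \<tau>))) (at t within {0..})"
        using solx by (auto simp: is_solution_def)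
      show "\<And>t. t \<ge> 0 \<Longrightarrow> (y has_vector_derivative rhs \<beta>h \<beta>v \<mu>h \<mu>v Cvh Chv (y t) (y (t - \<tau>))) (at t within {0..})"
        using soly by (auto simp: is_solution_def)
      fix T :: real
      have "bounded (x ` {-\<tau>..T})"
        by (intro compact_imp_bounded compact_continuous_image continuous_on_subset[OF xc]) auto
      then obtain R1 where R1: "\<forall>z\<in>x ` {-\<tau>..T}. norm z \<le> R1" by (auto simp: bounded_iff)
      have "bounded (y ` {-\<tau>..T})"
        by (intro compact_imp_bounded compact_continuous_image continuous_on_subset[OF yc]) auto
      then obtain R2 where R2: "\<forall>z\<in>y ` {-\<tau>..T}. norm z \<le> R2" by (auto simp: bounded_iff)
      define R where "R = max R1 R2"
      have Rx: "norm (x s) \<le> R" "norm (y s) \<le> R" if "s \<in> {-\<tau>..T}" for s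
        using R1 R2 that by (force simp: R_def)+
      show "\<exists>L. \<forall>t\<in>{0..T}. norm (rhs \<beta>h \<beta>v \<mu>h \<mu>v Cvh Chv (x t) (x (t - \<tau>)) - rhs \<beta>h \<beta>v \<mu>h \<mu>v Cvh Chv (y t) (y (t - \<tau>)))
          \<le> L * (norm (x t - y t) + norm (x (t - \<tau>) - y (t - \<tau>)))"
      proof (intro exI ballI)
        fix t assume t: "t \<in> {0..T}"
        have i1: "t \<in> {-\<tau>..T}" "t - \<tau> \<in> {-\<tau>..T}" using t \<tau> by auto
        show "norm (rhs \<beta>h \<beta>v \<mu>h \<mu>v Cvh Chv (x t) (x (t - \<tau>)) - rhs \<beta>h \<beta>v \<mu>h \<mu>v Cvh Chv (y t) (y (t - \<tau>)))
          \<le> (4 * Cvh * R / n0 + 2 * \<mu>h + 4 * Chv * R + 2 * \<mu>v) * (norm (x t - y t) + norm (x (t - \<tau>) - y (t - \<tau>)))"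
        proof (rule rhs_lip[OF par(1-4) n0(1)])
          show "norm (x t) \<le> R" "norm (x (t - \<tau>)) \<le> R" "norm (y t) \<le> R" "norm (y (t - \<tau>)) \<le> R"
            using Rx i1 by auto
          show "x t $ 3 + x t $ 4 = y t $ 3 + y t $ 4" "x t $ 3 + x t $ 4 \<ge> n0"
            using sx[of t] sy[of t] n0(2)[of t] i1 by auto
          show "x (t - \<tau>) $ 3 + x (t - \<tau>) $ 4 = y (t - \<tau>) $ 3 + y (t - \<tau>) $ 4" "x (t - \<tau>) $ 3 + x (t - \<tau>) $ 4 \<ge> n0"
            using sx[of "t - \<tau>"] sy[of "t - \<tau>"] n0(2)[of "t - \<tau>"] i1 by auto
        qed
      qed
    qed
  qed
qed

lemma clamp_lip: "\<bar>max 0 (min M v) - max 0 (min M v')\<bar> \<le> \<bar>v - v'\<bar>" for M v v' :: real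
  by (auto simp: max_def min_def abs_if)

lemma sol_exists:
  assumes par: "\<beta>h > 0" "\<beta>v > 0" "\<mu>h > 0" "\<mu>v > 0" "Cvh > 0" "Chv > 0" and \<tau>: "\<tau> \<ge> 0"
    and C: "in_Cplus \<tau> \<phi>"
  shows "\<exists>x. is_solution \<beta>h \<beta>v \<mu>h \<mu>v Cvh Chv \<tau> \<phi> x \<and> (\<forall>t\<ge>0. \<forall>i. 0 \<le> x t $ i)"
proof -
  have \<phi>c: "continuous_on {-\<tau>..0} \<phi>" and \<phi>nn: "\<And>\<theta> i. \<theta> \<in> {-\<tau>..0} \<Longrightarrow> 0 \<le> \<phi> \<theta> $ i"
    using C by (auto simp: in_Cplus_def)
  have "bounded (\<phi> ` {-\<tau>..0})" by (intro compact_imp_bounded compact_continuous_image \<phi>c) auto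
  then obtain B\<phi> where B\<phi>': "\<forall>z\<in>\<phi> ` {-\<tau>..0}. norm z \<le> B\<phi>" by (auto simp: bounded_iff)
  have \<phi>le: "\<phi> \<theta> $ i \<le> B\<phi>" if "\<theta> \<in> {-\<tau>..0}" for \<theta> i
    using B\<phi>' that component_le_norm_cart[of "\<phi> \<theta>" i] by force
  have B\<phi>0: "B\<phi> \<ge> 0" using \<phi>le[of 0 1] \<phi>nn[of 0 1] \<tau> by simp
  define n where "n = nfun \<beta>v \<mu>v \<tau> \<phi>"
  obtain n0 where n0: "n0 > 0" "\<And>t. n t \<ge> n0" using nfun_props(1)[OF par(2,4) \<tau> C] unfolding n_def by blast
  have nc: "continuous_on UNIV n" using nfun_props(2)[OF par(2,4) \<tau> C] unfolding n_def .
  have npos: "n t > 0" for t using n0(1) n0(2)[of t] by linarith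
  have nnz: "n t \<noteq> 0" for t using npos[of t] by simp
  define M1 where "M1 = B\<phi> + \<beta>h / \<mu>h"
  define M2 where "M2 = B\<phi> + Cvh * M1 / \<mu>h"
  define M3 where "M3 = B\<phi> + \<beta>v / \<mu>v"
  define M4 where "M4 = B\<phi> + Chv * M2 * M3 / \<mu>v"
  have M1: "M1 \<ge> B\<phi>" "M1 \<ge> 0" "\<mu>h * M1 \<ge> \<beta>h" using par B\<phi>0 by (auto simp: M1_def field_simps)
  have M2: "M2 \<ge> B\<phi>" "M2 \<ge> 0" "\<mu>h * M2 \<ge> Cvh * M1" using par B\<phi>0 M1 by (auto simp: M2_def field_simps)
  have M3: "M3 \<ge> B\<phi>" "M3 \<ge> 0" "\<mu>v * M3 \<ge> \<beta>v" using par B\<phi>0 by (auto simp: M3_def field_simps)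
  have M4: "M4 \<ge> B\<phi>" "M4 \<ge> 0" "\<mu>v * M4 \<ge> Chv * M2 * M3" using par B\<phi>0 M2 M3 by (auto simp: M4_def field_simps)
  define c where "c M v = max 0 (min M v)" for M v :: real
  define q where "q s z = max 0 (min 1 (z $ 4 / n s))" for s and z :: "real^4"
  have c_rng: "0 \<le> c M v" "M \<ge> 0 \<Longrightarrow> c M v \<le> M" for M v by (auto simp: c_def)
  have c_lip: "\<bar>c M v - c M v'\<bar> \<le> \<bar>v - v'\<bar>" for M v v' unfolding c_def by (rule clamp_lip)
  have c_id: "0 \<le> v \<Longrightarrow> v \<le> M \<Longrightarrow> c M v = v" for M v by (auto simp: c_def)
  have c_neg: "v < 0 \<Longrightarrow> M \<ge> 0 \<Longrightarrow> c M v = 0" for M v by (auto simp: c_def)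
  have c_big: "v > M \<Longrightarrow> M \<ge> 0 \<Longrightarrow> c M v = M" for M v by (auto simp: c_def)
  have q_rng: "0 \<le> q s z" "q s z \<le> 1" for s z by (auto simp: q_def)
  have q_lip: "\<bar>q s z - q s z'\<bar> \<le> \<bar>z $ 4 - z' $ 4\<bar> / n0" for s z z'
  proof -
    have "\<bar>q s z - q s z'\<bar> \<le> \<bar>z $ 4 / n s - z' $ 4 / n s\<bar>" unfolding q_def by (rule clamp_lip)
    also have "\<dots> = \<bar>z $ 4 - z' $ 4\<bar> / n s" using npos[of s] by (simp add: diff_divide_distrib[symmetric])
    also have "\<dots> \<le> \<bar>z $ 4 - z' $ 4\<bar> / n0" using n0 by (intro divide_left_mono) (auto simp: npos)
    finally show ?thesis .
  qed
  have qc_rng: "0 \<le> q s z * c M v" "M \<ge> 0 \<Longrightarrow> q s z * c M v \<le> M" for s z M v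
  proof -
    show "0 \<le> q s z * c M v" using q_rng c_rng by simp
    assume "M \<ge> 0"
    then have "q s z * c M v \<le> 1 * M" using q_rng c_rng by (intro mult_mono) auto
    then show "q s z * c M v \<le> M" by simp
  qed
  have cc_rng: "0 \<le> c M v * c M' v'" "M \<ge> 0 \<Longrightarrow> M' \<ge> 0 \<Longrightarrow> c M v * c M' v' \<le> M * M'" for M v M' v'
  proof -
    show "0 \<le> c M v * c M' v'" using c_rng by simp
    assume "M \<ge> 0" "M' \<ge> 0"
    then show "c M v * c M' v' \<le> M * M'" using c_rng by (intro mult_mono) auto
  qed
  define G :: "real \<Rightarrow> real^4 \<Rightarrow> real^4 \<Rightarrow> real^4" where "G t z w = (\<chi> i. if i = 1 then \<beta>h - Cvh * q t z * c M1 (z$1) - \<mu>h * c M1 (z$1)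
      else if i = 2 then Cvh * q (t - \<tau>) w * c M1 (w$1) - \<mu>h * c M2 (z$2)
      else if i = 3 then \<beta>v - Chv * c M2 (z$2) * c M3 (z$3) - \<mu>v * c M3 (z$3)
      else Chv * c M2 (z$2) * c M3 (z$3) - \<mu>v * c M4 (z$4))" for t z w
  have G1: "G t z w $ 1 = \<beta>h - Cvh * (q t z * c M1 (z$1)) - \<mu>h * c M1 (z$1)" for t z w by (simp add: G_def)
  have G2: "G t z w $ 2 = Cvh * (q (t - \<tau>) w * c M1 (w$1)) - \<mu>h * c M2 (z$2)" for t z w by (simp add: G_def)
  have G3: "G t z w $ 3 = \<beta>v - Chv * (c M2 (z$2) * c M3 (z$3)) - \<mu>v * c M3 (z$3)" for t z w by (simp add: G_def)
  have G4: "G t z w $ 4 = Chv * (c M2 (z$2) * c M3 (z$3)) - \<mu>v * c M4 (z$4)" for t z w by (simp add: G_def)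
  have Gcont: "continuous_on UNIV (\<lambda>r. G r (u r) (u (r - \<tau>)))" if uc: "continuous_on UNIV u" for u
  proof -
    have ud: "continuous_on UNIV (\<lambda>r. u (r - \<tau>))" by (rule continuous_on_compose2[OF uc]) (auto intro!: continuous_intros)
    have nd: "continuous_on UNIV (\<lambda>r. n (r - \<tau>))" by (rule continuous_on_compose2[OF nc]) (auto intro!: continuous_intros)
    have cq1: "continuous_on UNIV (\<lambda>r. q r (u r))" unfolding q_def
      by (intro continuous_intros uc nc) (auto simp: nnz)
    have cq2: "continuous_on UNIV (\<lambda>r. q (r - \<tau>) (u (r - \<tau>)))" unfolding q_def
      by (intro continuous_intros ud nd) (auto simp: nnz)
    have cc: "continuous_on UNIV (\<lambda>r. c M (f r))" if "continuous_on UNIV f" for f M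
      unfolding c_def by (intro continuous_intros that)
    have k1: "continuous_on UNIV (\<lambda>r. \<beta>h - Cvh * q r (u r) * c M1 (u r $ 1) - \<mu>h * c M1 (u r $ 1))"
      by (intro continuous_intros cq1 cc uc)
    have k2: "continuous_on UNIV (\<lambda>r. Cvh * q (r - \<tau>) (u (r - \<tau>)) * c M1 (u (r - \<tau>) $ 1) - \<mu>h * c M2 (u r $ 2))"
      by (intro continuous_intros cq2 cc uc ud)
    have k3: "continuous_on UNIV (\<lambda>r. \<beta>v - Chv * c M2 (u r $ 2) * c M3 (u r $ 3) - \<mu>v * c M3 (u r $ 3))"
      by (intro continuous_intros cc uc)
    have k4: "continuous_on UNIV (\<lambda>r. Chv * c M2 (u r $ 2) * c M3 (u r $ 3) - \<mu>v * c M4 (u r $ 4))"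
      by (intro continuous_intros cc uc)
    show ?thesis unfolding G_def
    proof (rule continuous_on_vec_lambda)
      fix i :: 4
      show "continuous_on UNIV (\<lambda>r. if i = 1 then \<beta>h - Cvh * q r (u r) * c M1 (u r $ 1) - \<mu>h * c M1 (u r $ 1)
      else if i = 2 then Cvh * q (r - \<tau>) (u (r - \<tau>)) * c M1 (u (r - \<tau>) $ 1) - \<mu>h * c M2 (u r $ 2)
      else if i = 3 then \<beta>v - Chv * c M2 (u r $ 2) * c M3 (u r $ 3) - \<mu>v * c M3 (u r $ 3)
      else Chv * c M2 (u r $ 2) * c M3 (u r $ 3) - \<mu>v * c M4 (u r $ 4))"
        using exhaust_4[of i] k1 k2 k3 k4 by auto
    qed
  qed
  define K1 where "K1 = Cvh * (1 + M1 / n0) + \<mu>h"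
  define K3 where "K3 = Chv * (M2 + M3) + \<mu>v"
  have K1: "K1 \<ge> 0" using par M1 n0 by (simp add: K1_def)
  have K3: "K3 \<ge> 0" using par M2 M3 by (simp add: K3_def)
  have Glip: "norm (G t z w - G t z' w') \<le> (2 * K1 + 2 * K3) * (norm (z - z') + norm (w - w'))" for t z w z' w'
  proof -
    define dz where "dz = norm (z - z')"
    define dw where "dw = norm (w - w')"
    have dz: "\<bar>z $ i - z' $ i\<bar> \<le> dz" for i unfolding dz_def using component_le_norm_cart[of "z - z'" i] by simp
    have dw: "\<bar>w $ i - w' $ i\<bar> \<le> dw" for i unfolding dw_def using component_le_norm_cart[of "w - w'" i] by simp
    have dz0: "dz \<ge> 0" "dw \<ge> 0" by (auto simp: dz_def dw_def)
    have cd: "\<bar>c M (z $ i) - c M (z' $ i)\<bar> \<le> dz" "\<bar>c M (w $ i) - c M (w' $ i)\<bar> \<le> dw" for M i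
      using c_lip dz dw order_trans by blast+
    have qd: "\<bar>q s z - q s z'\<bar> \<le> dz / n0" "\<bar>q s w - q s w'\<bar> \<le> dw / n0" for s
      using q_lip[of s z z'] q_lip[of s w w'] dz[of 4] dw[of 4] n0(1)
      by (meson divide_right_mono less_imp_le order_trans)+
    have qcd: "\<bar>q s z * c M1 (z $ 1) - q s z' * c M1 (z' $ 1)\<bar> \<le> dz + M1 * (dz / n0)"
      "\<bar>q s w * c M1 (w $ 1) - q s w' * c M1 (w' $ 1)\<bar> \<le> dw + M1 * (dw / n0)" for s
    proof -
      have "\<bar>q s z * c M1 (z $ 1) - q s z' * c M1 (z' $ 1)\<bar>
          \<le> \<bar>q s z\<bar> * \<bar>c M1 (z $ 1) - c M1 (z' $ 1)\<bar> + \<bar>c M1 (z' $ 1)\<bar> * \<bar>q s z - q s z'\<bar>"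
        by (rule prod_diff)
      also have "\<dots> \<le> 1 * dz + M1 * (dz / n0)"
        using q_rng c_rng M1 cd qd by (intro add_mono mult_mono) auto
      finally show "\<bar>q s z * c M1 (z $ 1) - q s z' * c M1 (z' $ 1)\<bar> \<le> dz + M1 * (dz / n0)" by simp
      have "\<bar>q s w * c M1 (w $ 1) - q s w' * c M1 (w' $ 1)\<bar>
          \<le> \<bar>q s w\<bar> * \<bar>c M1 (w $ 1) - c M1 (w' $ 1)\<bar> + \<bar>c M1 (w' $ 1)\<bar> * \<bar>q s w - q s w'\<bar>"
        by (rule prod_diff)
      also have "\<dots> \<le> 1 * dw + M1 * (dw / n0)"
        using q_rng c_rng M1 cd qd by (intro add_mono mult_mono) auto
      finally show "\<bar>q s w * c M1 (w $ 1) - q s w' * c M1 (w' $ 1)\<bar> \<le> dw + M1 * (dw / n0)" by simp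
    qed
    have ccd: "\<bar>c M2 (z $ 2) * c M3 (z $ 3) - c M2 (z' $ 2) * c M3 (z' $ 3)\<bar> \<le> M2 * dz + M3 * dz"
    proof -
      have "\<bar>c M2 (z $ 2) * c M3 (z $ 3) - c M2 (z' $ 2) * c M3 (z' $ 3)\<bar>
          \<le> \<bar>c M2 (z $ 2)\<bar> * \<bar>c M3 (z $ 3) - c M3 (z' $ 3)\<bar> + \<bar>c M3 (z' $ 3)\<bar> * \<bar>c M2 (z $ 2) - c M2 (z' $ 2)\<bar>"
        by (rule prod_diff)
      also have "\<dots> \<le> M2 * dz + M3 * dz"
        using c_rng M2 M3 cd by (intro add_mono mult_mono) auto
      finally show ?thesis .
    qed
    have e1: "\<bar>(G t z w - G t z' w') $ 1\<bar> \<le> K1 * (dz + dw)"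
    proof -
      have "\<bar>(G t z w - G t z' w') $ 1\<bar> = \<bar>- Cvh * (q t z * c M1 (z$1) - q t z' * c M1 (z'$1)) - \<mu>h * (c M1 (z$1) - c M1 (z'$1))\<bar>"
        by (simp add: G1 algebra_simps)
      also have "\<dots> \<le> Cvh * \<bar>q t z * c M1 (z$1) - q t z' * c M1 (z'$1)\<bar> + \<mu>h * \<bar>c M1 (z$1) - c M1 (z'$1)\<bar>"
        using par by (intro tri1) auto
      also have "\<dots> \<le> Cvh * (dz + M1 * (dz / n0)) + \<mu>h * dz"
        using par by (intro add_mono mult_left_mono qcd cd) auto
      also have "\<dots> = K1 * dz" by (simp add: K1_def algebra_simps)
      also have "\<dots> \<le> K1 * (dz + dw)" using K1 dz0 by (intro mult_left_mono) auto
      finally show ?thesis .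
    qed
    have e2: "\<bar>(G t z w - G t z' w') $ 2\<bar> \<le> K1 * (dz + dw)"
    proof -
      have "\<bar>(G t z w - G t z' w') $ 2\<bar> = \<bar>Cvh * (q (t - \<tau>) w * c M1 (w$1) - q (t - \<tau>) w' * c M1 (w'$1)) - \<mu>h * (c M2 (z$2) - c M2 (z'$2))\<bar>"
        by (simp add: G2 algebra_simps)
      also have "\<dots> \<le> Cvh * \<bar>q (t - \<tau>) w * c M1 (w$1) - q (t - \<tau>) w' * c M1 (w'$1)\<bar> + \<mu>h * \<bar>c M2 (z$2) - c M2 (z'$2)\<bar>"
        using par by (intro tri1) auto
      also have "\<dots> \<le> Cvh * (dw + M1 * (dw / n0)) + \<mu>h * dz"
        using par by (intro add_mono mult_left_mono qcd cd) auto
      also have "\<dots> = Cvh * (1 + M1 / n0) * dw + \<mu>h * dz" by (simp add: algebra_simps)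
      also have "\<dots> \<le> K1 * (dz + dw)"
      proof -
        have "Cvh * (1 + M1 / n0) * dw \<le> Cvh * (1 + M1 / n0) * (dz + dw)"
          using par M1 n0 dz0 by (intro mult_left_mono) auto
        moreover have "\<mu>h * dz \<le> \<mu>h * (dz + dw)" using par dz0 by (intro mult_left_mono) auto
        ultimately show ?thesis by (simp add: K1_def algebra_simps)
      qed
      finally show ?thesis .
    qed
    have e3: "\<bar>(G t z w - G t z' w') $ 3\<bar> \<le> K3 * (dz + dw)"
    proof -
      have "\<bar>(G t z w - G t z' w') $ 3\<bar> = \<bar>- Chv * (c M2 (z $ 2) * c M3 (z $ 3) - c M2 (z' $ 2) * c M3 (z' $ 3)) - \<mu>v * (c M3 (z$3) - c M3 (z'$3))\<bar>"
        by (simp add: G3 algebra_simps)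
      also have "\<dots> \<le> Chv * \<bar>c M2 (z $ 2) * c M3 (z $ 3) - c M2 (z' $ 2) * c M3 (z' $ 3)\<bar> + \<mu>v * \<bar>c M3 (z$3) - c M3 (z'$3)\<bar>"
        using par by (intro tri1) auto
      also have "\<dots> \<le> Chv * (M2 * dz + M3 * dz) + \<mu>v * dz"
        using par by (intro add_mono mult_left_mono ccd cd) auto
      also have "\<dots> = K3 * dz" by (simp add: K3_def algebra_simps)
      also have "\<dots> \<le> K3 * (dz + dw)" using K3 dz0 by (intro mult_left_mono) auto
      finally show ?thesis .
    qed
    have e4: "\<bar>(G t z w - G t z' w') $ 4\<bar> \<le> K3 * (dz + dw)"
    proof -
      have "\<bar>(G t z w - G t z' w') $ 4\<bar> = \<bar>Chv * (c M2 (z $ 2) * c M3 (z $ 3) - c M2 (z' $ 2) * c M3 (z' $ 3)) - \<mu>v * (c M4 (z$4) - c M4 (z'$4))\<bar>"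
        by (simp add: G4 algebra_simps)
      also have "\<dots> \<le> Chv * \<bar>c M2 (z $ 2) * c M3 (z $ 3) - c M2 (z' $ 2) * c M3 (z' $ 3)\<bar> + \<mu>v * \<bar>c M4 (z$4) - c M4 (z'$4)\<bar>"
        using par by (intro tri1) auto
      also have "\<dots> \<le> Chv * (M2 * dz + M3 * dz) + \<mu>v * dz"
        using par by (intro add_mono mult_left_mono ccd cd) auto
      also have "\<dots> = K3 * dz" by (simp add: K3_def algebra_simps)
      also have "\<dots> \<le> K3 * (dz + dw)" using K3 dz0 by (intro mult_left_mono) auto
      finally show ?thesis .
    qed
    have "norm (G t z w - G t z' w') \<le> (\<Sum>i\<in>UNIV. \<bar>(G t z w - G t z' w') $ i\<bar>)" by (rule norm_le_l1_cart)
    also have "\<dots> \<le> K1 * (dz + dw) + K1 * (dz + dw) + K3 * (dz + dw) + K3 * (dz + dw)"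
      unfolding sum_4 using e1 e2 e3 e4 by linarith
    also have "\<dots> = (2 * K1 + 2 * K3) * (norm (z - z') + norm (w - w'))" by (simp add: dz_def dw_def algebra_simps)
    finally show ?thesis .
  qed
  define KG where "KG = (\<beta>h + Cvh * M1 + \<mu>h * M1) + (Cvh * M1 + \<mu>h * M2)
      + (\<beta>v + Chv * (M2 * M3) + \<mu>v * M3) + (Chv * (M2 * M3) + \<mu>v * M4)"
  have Gbnd: "norm (G t z w) \<le> KG" for t z w
  proof -
    have a1: "\<bar>G t z w $ 1\<bar> \<le> \<beta>h + Cvh * M1 + \<mu>h * M1"
    proof -
      have "Cvh * (q t z * c M1 (z$1)) \<le> Cvh * M1" "0 \<le> Cvh * (q t z * c M1 (z$1))"
        "\<mu>h * c M1 (z$1) \<le> \<mu>h * M1" "0 \<le> \<mu>h * c M1 (z$1)"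
        using par M1 qc_rng c_rng by (auto intro: mult_left_mono)
      then show ?thesis unfolding G1 abs_le_iff using par by linarith
    qed
    have a2: "\<bar>G t z w $ 2\<bar> \<le> Cvh * M1 + \<mu>h * M2"
    proof -
      have "Cvh * (q (t - \<tau>) w * c M1 (w$1)) \<le> Cvh * M1" "0 \<le> Cvh * (q (t - \<tau>) w * c M1 (w$1))"
        "\<mu>h * c M2 (z$2) \<le> \<mu>h * M2" "0 \<le> \<mu>h * c M2 (z$2)"
        using par M1 M2 qc_rng c_rng by (auto intro: mult_left_mono)
      then show ?thesis unfolding G2 abs_le_iff using par by linarith
    qed
    have a3: "\<bar>G t z w $ 3\<bar> \<le> \<beta>v + Chv * (M2 * M3) + \<mu>v * M3"
    proof -
      have "Chv * (c M2 (z$2) * c M3 (z$3)) \<le> Chv * (M2 * M3)" "0 \<le> Chv * (c M2 (z$2) * c M3 (z$3))"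
        "\<mu>v * c M3 (z$3) \<le> \<mu>v * M3" "0 \<le> \<mu>v * c M3 (z$3)"
        using par M2 M3 cc_rng c_rng by (auto intro: mult_left_mono)
      then show ?thesis unfolding G3 abs_le_iff using par by linarith
    qed
    have a4: "\<bar>G t z w $ 4\<bar> \<le> Chv * (M2 * M3) + \<mu>v * M4"
    proof -
      have "Chv * (c M2 (z$2) * c M3 (z$3)) \<le> Chv * (M2 * M3)" "0 \<le> Chv * (c M2 (z$2) * c M3 (z$3))"
        "\<mu>v * c M4 (z$4) \<le> \<mu>v * M4" "0 \<le> \<mu>v * c M4 (z$4)"
        using par M2 M3 M4 cc_rng c_rng by (auto intro: mult_left_mono)
      then show ?thesis unfolding G4 abs_le_iff using par by linarith
    qed
    have "norm (G t z w) \<le> (\<Sum>i\<in>UNIV. \<bar>G t z w $ i\<bar>)" by (rule norm_le_l1_cart)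
    also have "\<dots> \<le> KG" unfolding sum_4 KG_def using a1 a2 a3 a4 by linarith
    finally show ?thesis .
  qed
  obtain u where uc: "continuous_on UNIV u" and uinit: "\<forall>\<theta>\<in>{-\<tau>..0}. u \<theta> = \<phi> \<theta>"
    and uder: "\<forall>t\<ge>0. (u has_vector_derivative G t (u t) (u (t - \<tau>))) (at t within {0..})"
    using dde_exists[OF \<tau> \<phi>c Gcont Glip Gbnd] by blast
  have ud: "((\<lambda>s. u s $ i) has_real_derivative G t (u t) (u (t - \<tau>)) $ i) (at t)" if "t > 0" for t i
    using uder that by (intro comp_deriv within_to_at) auto
  have ucomp: "continuous_on {0..} (\<lambda>s. u s $ i)" for i
    by (intro continuous_intros continuous_on_subset[OF uc]) auto
  have u0: "0 \<le> u 0 $ i" "u 0 $ i \<le> B\<phi>" for i using uinit \<phi>nn[of 0 i] \<phi>le[of 0 i] \<tau> by auto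
  have lo: "\<forall>t\<ge>0. 0 \<le> u t $ i" if h: "\<And>t. t > 0 \<Longrightarrow> u t $ i < 0 \<Longrightarrow> G t (u t) (u (t - \<tau>)) $ i \<ge> 0" for i
    by (rule barrier_low[OF ucomp u0(1)]) (use ud h in blast)
  have hi: "\<forall>t\<ge>0. u t $ i \<le> M" if M: "B\<phi> \<le> M"
    and h: "\<And>t. t > 0 \<Longrightarrow> u t $ i > M \<Longrightarrow> G t (u t) (u (t - \<tau>)) $ i \<le> 0" for i M
    by (rule barrier_up[OF ucomp order_trans[OF u0(2) M]]) (use ud h in blast)
  have b1l: "\<forall>t\<ge>0. 0 \<le> u t $ 1"
    by (rule lo) (use par M1 in \<open>simp add: G1 c_neg\<close>)
  have b1h: "\<forall>t\<ge>0. u t $ 1 \<le> M1"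
  proof (rule hi[OF M1(1)])
    fix t assume "t > 0" "u t $ 1 > M1"
    then have "G t (u t) (u (t - \<tau>)) $ 1 = \<beta>h - Cvh * (q t (u t) * M1) - \<mu>h * M1" using M1 by (simp add: G1 c_big)
    moreover have "0 \<le> Cvh * (q t (u t) * M1)" using par q_rng M1 by simp
    ultimately show "G t (u t) (u (t - \<tau>)) $ 1 \<le> 0" using M1 by linarith
  qed
  have b2l: "\<forall>t\<ge>0. 0 \<le> u t $ 2"
  proof (rule lo)
    fix t assume "t > 0" "u t $ 2 < 0"
    then show "G t (u t) (u (t - \<tau>)) $ 2 \<ge> 0" using par M2 qc_rng by (simp add: G2 c_neg)
  qed
  have b2h: "\<forall>t\<ge>0. u t $ 2 \<le> M2"
  proof (rule hi[OF M2(1)])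
    fix t assume "t > 0" "u t $ 2 > M2"
    then have "G t (u t) (u (t - \<tau>)) $ 2 = Cvh * (q (t - \<tau>) (u (t - \<tau>)) * c M1 (u (t - \<tau>) $ 1)) - \<mu>h * M2"
      using M2 by (simp add: G2 c_big)
    moreover have "Cvh * (q (t - \<tau>) (u (t - \<tau>)) * c M1 (u (t - \<tau>) $ 1)) \<le> Cvh * M1"
      using par qc_rng M1 by (intro mult_left_mono) auto
    ultimately show "G t (u t) (u (t - \<tau>)) $ 2 \<le> 0" using M2 by linarith
  qed
  have b3l: "\<forall>t\<ge>0. 0 \<le> u t $ 3"
  proof (rule lo)
    fix t assume "t > 0" "u t $ 3 < 0"
    then show "G t (u t) (u (t - \<tau>)) $ 3 \<ge> 0" using par M3 by (simp add: G3 c_neg)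
  qed
  have b3h: "\<forall>t\<ge>0. u t $ 3 \<le> M3"
  proof (rule hi[OF M3(1)])
    fix t assume "t > 0" "u t $ 3 > M3"
    then have "G t (u t) (u (t - \<tau>)) $ 3 = \<beta>v - Chv * (c M2 (u t $ 2) * M3) - \<mu>v * M3"
      using M3 by (simp add: G3 c_big)
    moreover have "0 \<le> Chv * (c M2 (u t $ 2) * M3)" using par c_rng M3 by simp
    ultimately show "G t (u t) (u (t - \<tau>)) $ 3 \<le> 0" using M3 by linarith
  qed
  have b4l: "\<forall>t\<ge>0. 0 \<le> u t $ 4"
  proof (rule lo)
    fix t assume "t > 0" "u t $ 4 < 0"
    then show "G t (u t) (u (t - \<tau>)) $ 4 \<ge> 0" using par M4 cc_rng by (simp add: G4 c_neg)
  qed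
  have b4h: "\<forall>t\<ge>0. u t $ 4 \<le> M4"
  proof (rule hi[OF M4(1)])
    fix t assume "t > 0" "u t $ 4 > M4"
    then have "G t (u t) (u (t - \<tau>)) $ 4 = Chv * (c M2 (u t $ 2) * c M3 (u t $ 3)) - \<mu>v * M4"
      using M4 by (simp add: G4 c_big)
    moreover have "Chv * (c M2 (u t $ 2) * c M3 (u t $ 3)) \<le> Chv * (M2 * M3)"
      using par cc_rng M2 M3 by (intro mult_left_mono) auto
    ultimately show "G t (u t) (u (t - \<tau>)) $ 4 \<le> 0" using M4 by linarith
  qed
  have box: "0 \<le> u s $ 1 \<and> u s $ 1 \<le> M1 \<and> 0 \<le> u s $ 2 \<and> u s $ 2 \<le> M2 \<and>
      0 \<le> u s $ 3 \<and> u s $ 3 \<le> M3 \<and> 0 \<le> u s $ 4 \<and> u s $ 4 \<le> M4" if s: "s \<ge> -\<tau>" for s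
  proof (cases "s \<ge> 0")
    case True
    then show ?thesis
      using b1l[rule_format, OF True] b1h[rule_format, OF True] b2l[rule_format, OF True] b2h[rule_format, OF True]
        b3l[rule_format, OF True] b3h[rule_format, OF True] b4l[rule_format, OF True] b4h[rule_format, OF True]
      by simp
  next
    case False
    then have s': "s \<in> {-\<tau>..0}" using s by simp
    then have "u s = \<phi> s" using uinit by blast
    moreover have le: "\<phi> s $ i \<le> M" if "B\<phi> \<le> M" for i M using \<phi>le[OF s', of i] that by linarith
    ultimately show ?thesis using \<phi>nn[OF s'] le[OF M1(1)] le[OF M2(1)] le[OF M3(1)] le[OF M4(1)] by simp
  qed
  have cid: "c M1 (u s $ 1) = u s $ 1" "c M2 (u s $ 2) = u s $ 2" "c M3 (u s $ 3) = u s $ 3" "c M4 (u s $ 4) = u s $ 4"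
    if "s \<ge> -\<tau>" for s using box[OF that] by (auto intro!: c_id)
  have sd: "((\<lambda>s. u s $ 3 + u s $ 4) has_real_derivative (\<beta>v - \<mu>v * (u t $ 3 + u t $ 4))) (at t within {0..})"
    if t: "t \<ge> 0" for t
  proof -
    have "((\<lambda>s. u s $ 3 + u s $ 4) has_real_derivative
        (G t (u t) (u (t - \<tau>)) $ 3 + G t (u t) (u (t - \<tau>)) $ 4)) (at t within {0..})"
      using uder t by (intro DERIV_add comp_deriv) auto
    moreover have "G t (u t) (u (t - \<tau>)) $ 3 + G t (u t) (u (t - \<tau>)) $ 4 = \<beta>v - \<mu>v * (u t $ 3 + u t $ 4)"
      using cid[of t] t \<tau> by (simp add: G3 G4 algebra_simps)
    ultimately show ?thesis by simp
  qed
  have f: "u t $ 3 + u t $ 4 = \<beta>v/\<mu>v + ((u 0 $ 3 + u 0 $ 4) - \<beta>v/\<mu>v) * exp(-\<mu>v*t)" if "t \<ge> 0" for t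
    using lin_formula[where f="\<lambda>s. u s $ 3 + u s $ 4" and b=\<mu>v and A=\<beta>v, OF par(4) sd that] by simp
  have u00: "u 0 = \<phi> 0" using uinit \<tau> by simp
  have sumn: "u s $ 3 + u s $ 4 = n s" if s: "s \<ge> -\<tau>" for s
  proof (cases "s \<le> 0")
    case True
    then have s': "s \<in> {-\<tau>..0}" using s by simp
    then show ?thesis using uinit clampt_id[OF s'] True by (simp add: n_def nfun_def)
  next
    case False
    then show ?thesis using f[of s] u00 by (simp add: n_def nfun_def)
  qed
  have qid: "q s (u s) = u s $ 4 / (u s $ 3 + u s $ 4)" if s: "s \<ge> -\<tau>" for s
  proof -
    have N: "u s $ 3 + u s $ 4 > 0" using sumn[OF s] npos[of s] by simp
    have "u s $ 4 / (u s $ 3 + u s $ 4) \<le> 1" using N box[OF s] by (simp add: divide_le_eq_1)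
    moreover have "u s $ 4 / (u s $ 3 + u s $ 4) \<ge> 0" using N box[OF s] by simp
    ultimately show ?thesis using sumn[OF s] by (simp add: q_def)
  qed
  have Geq: "G t (u t) (u (t - \<tau>)) = rhs \<beta>h \<beta>v \<mu>h \<mu>v Cvh Chv (u t) (u (t - \<tau>))" if t: "t \<ge> 0" for t
  proof -
    have t1: "t \<ge> -\<tau>" "t - \<tau> \<ge> -\<tau>" using t \<tau> by auto
    show ?thesis unfolding vec_eq_iff forall_4
      using cid[OF t1(1)] cid[OF t1(2)] qid[OF t1(1)] qid[OF t1(2)]
      by (simp add: G1 G2 G3 G4 rhs_c)
  qed
  have sol: "is_solution \<beta>h \<beta>v \<mu>h \<mu>v Cvh Chv \<tau> \<phi> u"
    unfolding is_solution_def using uinit uder Geq continuous_on_subset[OF uc] by auto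
  have nn: "\<forall>t\<ge>0. \<forall>i. 0 \<le> u t $ i"
  proof (intro allI impI)
    fix t :: real and i :: 4 assume "t \<ge> 0"
    then show "0 \<le> u t $ i" using exhaust_4[of i] b1l b2l b3l b4l by auto
  qed
  show ?thesis using sol nn by blast
qed

lemma ratio_rng:
  fixes a b :: real
  assumes "0 \<le> a" "0 \<le> b"
  shows "0 \<le> a / (b + a)" "a / (b + a) \<le> 1"
proof -
  show "0 \<le> a / (b + a)" using assms by simp
  show "a / (b + a) \<le> 1"
  proof (cases "b + a = 0")
    case True then show ?thesis by simp
  next
    case False
    then have "b + a > 0" using assms by linarith
    then show ?thesis using assms by (simp add: divide_le_eq_1)
  qed
qed

lemma sol_nonneg:
  assumes par: "\<beta>h > 0" "\<beta>v > 0" "\<mu>h > 0" "\<mu>v > 0" "Cvh > 0" "Chv > 0" and \<tau>: "\<tau> \<ge> 0"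
    and C: "in_Cplus \<tau> \<phi>" and sol: "is_solution \<beta>h \<beta>v \<mu>h \<mu>v Cvh Chv \<tau> \<phi> x"
  shows "\<forall>t\<ge>0. \<forall>i. 0 \<le> x t $ i"
proof -
  obtain u where u: "is_solution \<beta>h \<beta>v \<mu>h \<mu>v Cvh Chv \<tau> \<phi> u" "\<forall>t\<ge>0. \<forall>i. 0 \<le> u t $ i"
    using sol_exists[OF par \<tau> C] by blast
  have "\<forall>t\<ge>-\<tau>. x t = u t" using sol_unique[OF par(3,4,5,6,2) \<tau> C sol u(1)] .
  then show ?thesis using u(2) \<tau> by force
qed

lemma sol_bound:
  assumes par: "\<beta>h > 0" "\<beta>v > 0" "\<mu>h > 0" "\<mu>v > 0" "Cvh > 0" "Chv > 0" and \<tau>: "\<tau> \<ge> 0"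
    and C: "in_Cplus \<tau> \<phi>" and sol: "is_solution \<beta>h \<beta>v \<mu>h \<mu>v Cvh Chv \<tau> \<phi> x"
  shows "\<exists>T. \<forall>t\<ge>T. norm (x t) \<le> (\<beta>h/\<mu>h + 1) + (Cvh * (\<beta>h/\<mu>h + 1) / \<mu>h + 1) + (\<beta>v/\<mu>v + 1)"
proof -
  have nn: "\<And>t i. t \<ge> 0 \<Longrightarrow> 0 \<le> x t $ i" using sol_nonneg[OF par \<tau> C sol] by blast
  have der: "((\<lambda>s. x s $ i) has_real_derivative rhs \<beta>h \<beta>v \<mu>h \<mu>v Cvh Chv (x t) (x (t - \<tau>)) $ i) (at t)"
    if "t > 0" for t i
    using sol that by (intro comp_deriv within_to_at) (auto simp: is_solution_def)
  define B1 where "B1 = \<beta>h/\<mu>h + 1"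
  have "\<exists>T. \<forall>t\<ge>T. x t $ 1 \<le> \<beta>h/\<mu>h + 1"
  proof (rule eventually_le[OF par(3), where a=1])
    fix t :: real assume t: "t \<ge> 1"
    have r: "0 \<le> x t $ 4 / (x t $ 3 + x t $ 4)" using nn[of t 4] nn[of t 3] t ratio_rng by simp
    have "0 \<le> Cvh * (x t $ 4 / (x t $ 3 + x t $ 4)) * x t $ 1"
      using r nn[of t 1] t par by (intro mult_nonneg_nonneg) auto
    then have "rhs \<beta>h \<beta>v \<mu>h \<mu>v Cvh Chv (x t) (x (t - \<tau>)) $ 1 \<le> \<beta>h - \<mu>h * x t $ 1"
      by (simp add: rhs_c)
    then show "\<exists>d. ((\<lambda>s. x s $ 1) has_real_derivative d) (at t) \<and> d \<le> \<beta>h - \<mu>h * x t $ 1"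
      using der[of t 1] t by auto
  qed
  then obtain T1 where T1: "\<And>t. t \<ge> T1 \<Longrightarrow> x t $ 1 \<le> B1" unfolding B1_def by blast
  have "\<exists>T. \<forall>t\<ge>T. x t $ 2 \<le> (Cvh * B1) / \<mu>h + 1"
  proof (rule eventually_le[OF par(3), where a="max T1 0 + \<tau> + 1"])
    fix t :: real assume t: "t \<ge> max T1 0 + \<tau> + 1"
    then have td: "t - \<tau> \<ge> 0" "t - \<tau> \<ge> T1" "t > 0" using \<tau> by auto
    have r: "0 \<le> x (t - \<tau>) $ 4 / (x (t - \<tau>) $ 3 + x (t - \<tau>) $ 4)"
      "x (t - \<tau>) $ 4 / (x (t - \<tau>) $ 3 + x (t - \<tau>) $ 4) \<le> 1"
      using nn[OF td(1), of 4] nn[OF td(1), of 3] ratio_rng by auto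
    have "(x (t - \<tau>) $ 4 / (x (t - \<tau>) $ 3 + x (t - \<tau>) $ 4)) * x (t - \<tau>) $ 1 \<le> 1 * B1"
      using r T1[OF td(2)] nn[OF td(1), of 1] by (intro mult_mono) auto
    then have "Cvh * ((x (t - \<tau>) $ 4 / (x (t - \<tau>) $ 3 + x (t - \<tau>) $ 4)) * x (t - \<tau>) $ 1) \<le> Cvh * B1"
      using par by (intro mult_left_mono) auto
    then have "rhs \<beta>h \<beta>v \<mu>h \<mu>v Cvh Chv (x t) (x (t - \<tau>)) $ 2 \<le> Cvh * B1 - \<mu>h * x t $ 2"
      by (simp add: rhs_c mult.assoc)
    then show "\<exists>d. ((\<lambda>s. x s $ 2) has_real_derivative d) (at t) \<and> d \<le> Cvh * B1 - \<mu>h * x t $ 2"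
      using der[OF td(3), of 2] by auto
  qed
  then obtain T2 where T2: "\<And>t. t \<ge> T2 \<Longrightarrow> x t $ 2 \<le> (Cvh * B1) / \<mu>h + 1" by blast
  define f where "f s = x s $ 3 + x s $ 4" for s
  have feq: "f = (\<lambda>s. x s $ 3 + x s $ 4)" by (simp add: f_def fun_eq_iff)
  have "\<exists>T. \<forall>t\<ge>T. f t \<le> \<beta>v/\<mu>v + 1"
  proof (rule eventually_le[OF par(4), where a=1])
    fix t :: real assume t: "t \<ge> 1"
    have "((\<lambda>s. x s $ 3 + x s $ 4) has_real_derivative
        (rhs \<beta>h \<beta>v \<mu>h \<mu>v Cvh Chv (x t) (x (t - \<tau>)) $ 3 + rhs \<beta>h \<beta>v \<mu>h \<mu>v Cvh Chv (x t) (x (t - \<tau>)) $ 4)) (at t)"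
      using t by (intro DERIV_add der) auto
    moreover have "rhs \<beta>h \<beta>v \<mu>h \<mu>v Cvh Chv (x t) (x (t - \<tau>)) $ 3 + rhs \<beta>h \<beta>v \<mu>h \<mu>v Cvh Chv (x t) (x (t - \<tau>)) $ 4
        = \<beta>v - \<mu>v * f t" by (simp add: rhs_c f_def algebra_simps)
    ultimately show "\<exists>d. (f has_real_derivative d) (at t) \<and> d \<le> \<beta>v - \<mu>v * f t"
      unfolding feq by auto
  qed
  then obtain T3 where T3: "\<And>t. t \<ge> T3 \<Longrightarrow> x t $ 3 + x t $ 4 \<le> \<beta>v/\<mu>v + 1" unfolding f_def by blast
  show ?thesis
  proof (intro exI allI impI)
    fix t assume t: "t \<ge> max 0 (max T1 (max T2 T3))"
    have "norm (x t) \<le> (\<Sum>i\<in>UNIV. \<bar>x t $ i\<bar>)" by (rule norm_le_l1_cart)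
    also have "\<dots> = x t $ 1 + x t $ 2 + (x t $ 3 + x t $ 4)"
      unfolding sum_4 using nn[of t] t by simp
    also have "\<dots> \<le> B1 + ((Cvh * B1) / \<mu>h + 1) + (\<beta>v/\<mu>v + 1)"
      using T1[of t] T2[of t] T3[of t] t by linarith
    finally show "norm (x t) \<le> (\<beta>h/\<mu>h + 1) + (Cvh * (\<beta>h/\<mu>h + 1) / \<mu>h + 1) + (\<beta>v/\<mu>v + 1)"
      by (simp add: B1_def)
  qed
qed

theorem theorem1:
  fixes \<beta>h \<beta>v \<mu>h \<mu>v Cvh Chv \<tau> :: real
  assumes "\<beta>h > 0" "\<beta>v > 0" "\<mu>h > 0" "\<mu>v > 0" "Cvh > 0" "Chv > 0" "\<tau> \<ge> 0"
  shows "(\<forall>\<phi>. in_Cplus \<tau> \<phi> \<longrightarrow>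
            (\<exists>x. is_solution \<beta>h \<beta>v \<mu>h \<mu>v Cvh Chv \<tau> \<phi> x) \<and>
            (\<forall>x y. is_solution \<beta>h \<beta>v \<mu>h \<mu>v Cvh Chv \<tau> \<phi> x \<longrightarrow>
                   is_solution \<beta>h \<beta>v \<mu>h \<mu>v Cvh Chv \<tau> \<phi> y \<longrightarrow>
                   (\<forall>t\<ge>-\<tau>. x t = y t)) \<and>
            (\<forall>x. is_solution \<beta>h \<beta>v \<mu>h \<mu>v Cvh Chv \<tau> \<phi> x \<longrightarrow>
                   (\<forall>t\<ge>0. \<forall>i. 0 \<le> x t $ i))) \<and>
         (\<exists>B. \<forall>\<phi> x. in_Cplus \<tau> \<phi> \<longrightarrow> is_solution \<beta>h \<beta>v \<mu>h \<mu>v Cvh Chv \<tau> \<phi> x \<longrightarrow>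
                 (\<exists>T. \<forall>t\<ge>T. norm (x t) \<le> B))"
proof -
  have P1: "\<forall>\<phi>. in_Cplus \<tau> \<phi> \<longrightarrow>
            (\<exists>x. is_solution \<beta>h \<beta>v \<mu>h \<mu>v Cvh Chv \<tau> \<phi> x) \<and>
            (\<forall>x y. is_solution \<beta>h \<beta>v \<mu>h \<mu>v Cvh Chv \<tau> \<phi> x \<longrightarrow>
                   is_solution \<beta>h \<beta>v \<mu>h \<mu>v Cvh Chv \<tau> \<phi> y \<longrightarrow>
                   (\<forall>t\<ge>-\<tau>. x t = y t)) \<and>
            (\<forall>x. is_solution \<beta>h \<beta>v \<mu>h \<mu>v Cvh Chv \<tau> \<phi> x \<longrightarrow>
                   (\<forall>t\<ge>0. \<forall>i. 0 \<le> x t $ i))"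
  proof (intro allI impI)
    fix \<phi> assume C: "in_Cplus \<tau> \<phi>"
    have e: "\<exists>x. is_solution \<beta>h \<beta>v \<mu>h \<mu>v Cvh Chv \<tau> \<phi> x" using sol_exists[OF assms C] by blast
    have u: "\<forall>x y. is_solution \<beta>h \<beta>v \<mu>h \<mu>v Cvh Chv \<tau> \<phi> x \<longrightarrow>
                   is_solution \<beta>h \<beta>v \<mu>h \<mu>v Cvh Chv \<tau> \<phi> y \<longrightarrow>
                   (\<forall>t\<ge>-\<tau>. x t = y t)"
      using sol_unique[OF assms(3,4,5,6,2,7) C] by blast
    have n: "\<forall>x. is_solution \<beta>h \<beta>v \<mu>h \<mu>v Cvh Chv \<tau> \<phi> x \<longrightarrow> (\<forall>t\<ge>0. \<forall>i. 0 \<le> x t $ i)"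
      using sol_nonneg[OF assms C] by blast
    show "(\<exists>x. is_solution \<beta>h \<beta>v \<mu>h \<mu>v Cvh Chv \<tau> \<phi> x) \<and>
            (\<forall>x y. is_solution \<beta>h \<beta>v \<mu>h \<mu>v Cvh Chv \<tau> \<phi> x \<longrightarrow>
                   is_solution \<beta>h \<beta>v \<mu>h \<mu>v Cvh Chv \<tau> \<phi> y \<longrightarrow>
                   (\<forall>t\<ge>-\<tau>. x t = y t)) \<and>
            (\<forall>x. is_solution \<beta>h \<beta>v \<mu>h \<mu>v Cvh Chv \<tau> \<phi> x \<longrightarrow>
                   (\<forall>t\<ge>0. \<forall>i. 0 \<le> x t $ i))"
      using e u n by blast
  qed
  have P2: "\<exists>B. \<forall>\<phi> x. in_Cplus \<tau> \<phi> \<longrightarrow> is_solution \<beta>h \<beta>v \<mu>h \<mu>v Cvh Chv \<tau> \<phi> x \<longrightarrow>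
                 (\<exists>T. \<forall>t\<ge>T. norm (x t) \<le> B)"
    using sol_bound[OF assms] by blast
  show ?thesis using P1 P2 by blast
qed


end
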